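(* Let $d=(d_1,\ldots,d_n)$ be a degree sequence with $n\ge 3$ and $\sum_i d_i>2n$, and let $m=\frac12\sum_i d_i$. There is a core cactus realization of $d$ if and only if $\mu_{odd}\le\mu_1$ and $m\le\left\lfloor\frac{3(n-1)-\mu_1}{2}\right\rfloor$.
   Context: A degree sequence is a sequence of integers $d_i\in\{1,\ldots,n-1\}$ with even sum and $d_1\ge\cdots\ge d_n$; a realization is a simple graph on $\{1,\ldots,n\}$ with $\deg(i)=d_i$. A cactus is a connected simple graph in which every edge lies on at most one cycle; a bridge is an edge whose removal disconnects the graph; a core cactus is a cactus with no bridge whose removal splits the graph into two components each containing a cycle. $\mu_1$ is the number of entries of $d$ equal to $1$, and $\mu_{odd}$ is the number of entries that are odd integers greater than $1$. *)

theory Defs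
  imports Main
begin

definition simple_graph :: "nat set \<Rightarrow> nat set set \<Rightarrow> bool" where
  "simple_graph V E \<longleftrightarrow> (\<forall>e\<in>E. \<exists>u v. e = {u, v} \<and> u \<noteq> v \<and> u \<in> V \<and> v \<in> V)"

definition adj :: "nat set set \<Rightarrow> nat \<Rightarrow> nat \<Rightarrow> bool" where
  "adj E u v \<longleftrightarrow> {u, v} \<in> E"

definition deg :: "nat set set \<Rightarrow> nat \<Rightarrow> nat" where
  "deg E v = card {e\<in>E. v \<in> e}"

definition connected_graph :: "nat set \<Rightarrow> nat set set \<Rightarrow> bool" where
  "connected_graph V E \<longleftrightarrow> V \<noteq> {} \<and> (\<forall>u\<in>V. \<forall>v\<in>V. (adj E)\<^sup>*\<^sup>* u v)"

definition cycle_edges :: "nat list \<Rightarrow> nat set set" where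
  "cycle_edges vs = {{vs ! i, vs ! ((i + 1) mod length vs)} | i. i < length vs}"

definition is_cycle :: "nat set set \<Rightarrow> nat set set \<Rightarrow> bool" where
  "is_cycle E C \<longleftrightarrow> (\<exists>vs. distinct vs \<and> length vs \<ge> 3 \<and> C = cycle_edges vs \<and> C \<subseteq> E)"

definition cactus :: "nat set \<Rightarrow> nat set set \<Rightarrow> bool" where
  "cactus V E \<longleftrightarrow> simple_graph V E \<and> connected_graph V E \<and>
     (\<forall>e\<in>E. \<forall>C1 C2. is_cycle E C1 \<and> is_cycle E C2 \<and> e \<in> C1 \<and> e \<in> C2 \<longrightarrow> C1 = C2)"

definition is_bridge :: "nat set \<Rightarrow> nat set set \<Rightarrow> nat set \<Rightarrow> bool" where
  "is_bridge V E e \<longleftrightarrow> e \<in> E \<and> \<not> connected_graph V (E - {e})"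

definition component :: "nat set set \<Rightarrow> nat \<Rightarrow> nat set" where
  "component E u = {w. (adj E)\<^sup>*\<^sup>* u w}"

definition has_cycle_in :: "nat set set \<Rightarrow> nat set \<Rightarrow> bool" where
  "has_cycle_in E S \<longleftrightarrow> (\<exists>C. is_cycle E C \<and> \<Union>C \<subseteq> S)"

definition core_cactus :: "nat set \<Rightarrow> nat set set \<Rightarrow> bool" where
  "core_cactus V E \<longleftrightarrow> cactus V E \<and>
     \<not> (\<exists>u v. is_bridge V E {u, v} \<and>
            has_cycle_in (E - {{u, v}}) (component (E - {{u, v}}) u) \<and>
            has_cycle_in (E - {{u, v}}) (component (E - {{u, v}}) v))"

definition degree_sequence :: "nat \<Rightarrow> (nat \<Rightarrow> nat) \<Rightarrow> bool" where
  "degree_sequence n d \<longleftrightarrow> (\<forall>i\<in>{1..n}. 1 \<le> d i \<and> d i \<le> n - 1) \<and>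
     even (\<Sum>i=1..n. d i) \<and> (\<forall>i j. 1 \<le> i \<and> i \<le> j \<and> j \<le> n \<longrightarrow> d j \<le> d i)"

definition realization :: "nat \<Rightarrow> (nat \<Rightarrow> nat) \<Rightarrow> nat set set \<Rightarrow> bool" where
  "realization n d E \<longleftrightarrow> simple_graph {1..n} E \<and> (\<forall>i\<in>{1..n}. deg E i = d i)"

definition mu1 :: "nat \<Rightarrow> (nat \<Rightarrow> nat) \<Rightarrow> nat" where
  "mu1 n d = card {i\<in>{1..n}. d i = 1}"

definition mu_odd :: "nat \<Rightarrow> (nat \<Rightarrow> nat) \<Rightarrow> nat" where
  "mu_odd n d = card {i\<in>{1..n}. odd (d i) \<and> d i > 1}"

end

theory Submission
  imports Defs
begin

definition on_cycle :: "nat set set \<Rightarrow> nat set \<Rightarrow> bool" where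
  "on_cycle E e \<longleftrightarrow> (\<exists>C. is_cycle E C \<and> e \<in> C)"

definition cp :: "nat set set \<Rightarrow> bool" where
  "cp E \<longleftrightarrow> (\<forall>e\<in>E. \<forall>C1 C2. is_cycle E C1 \<and> is_cycle E C2 \<and> e \<in> C1 \<and> e \<in> C2 \<longrightarrow> C1 = C2)"

definition ce :: "nat list \<Rightarrow> nat \<Rightarrow> nat set" where
  "ce vs i = {vs ! i, vs ! (Suc i mod length vs)}"

lemma adj_sym: "adj E x y \<Longrightarrow> adj E y x"
  by (simp add: adj_def insert_commute)

lemma reach_sym: "(adj E)\<^sup>*\<^sup>* x y \<Longrightarrow> (adj E)\<^sup>*\<^sup>* y x"
proof (induction rule: rtranclp_induct)
  case base then show ?case by simp
next
  case (step y z)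
  then show ?case by (meson adj_sym converse_rtranclp_into_rtranclp)
qed

lemma reach_mono: assumes "A \<subseteq> B" shows "(adj A)\<^sup>*\<^sup>* x y \<Longrightarrow> (adj B)\<^sup>*\<^sup>* x y"
proof (induction rule: rtranclp_induct)
  case base then show ?case by simp
next
  case (step y z)
  then show ?case using assms by (meson adj_def rtranclp.rtrancl_into_rtrancl subsetD)
qed

lemma reach_edge: "{x, y} \<in> E \<Longrightarrow> (adj E)\<^sup>*\<^sup>* x y"
  by (simp add: adj_def r_into_rtranclp)

lemma comp_eq: "(adj E)\<^sup>*\<^sup>* x y \<Longrightarrow> component E x = component E y"
  unfolding component_def
  by (auto intro: rtranclp_trans dest: reach_sym)

lemma cycle_edges_ce: "cycle_edges vs = ce vs ` {..<length vs}"
  by (auto simp: cycle_edges_def ce_def)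

lemma ce_inj:
  assumes "distinct vs" "3 \<le> length vs" "i < length vs" "j < length vs" "ce vs i = ce vs j"
  shows "i = j"
proof (rule ccontr)
  assume ne: "i \<noteq> j"
  let ?L = "length vs"
  have L0: "0 < ?L" using assms(3) by linarith
  have si: "Suc i mod ?L < ?L" "Suc j mod ?L < ?L" using L0 by auto
  from assms(5) ne have "vs ! i = vs ! (Suc j mod ?L) \<and> vs ! (Suc i mod ?L) = vs ! j"
    unfolding ce_def using assms(1,3,4) nth_eq_iff_index_eq by (auto simp: doubleton_eq_iff)
  then have "i = Suc j mod ?L" "Suc i mod ?L = j"
    using assms(1,3,4) si nth_eq_iff_index_eq by metis+
  then show False using assms(2,3,4) ne
  proof (cases "Suc j < ?L")
    case True
    then have "i = Suc j" using \<open>i = Suc j mod ?L\<close> by simp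
    then show False using \<open>Suc i mod ?L = j\<close> assms(2) True
      by (cases "Suc (Suc j) < ?L") (auto simp: mod_if split: if_splits)
  next
    case False
    then have "Suc j = ?L" using assms(4) by simp
    then have "i = 0" using \<open>i = Suc j mod ?L\<close> by simp
    then show False using \<open>Suc i mod ?L = j\<close> assms(2) \<open>Suc j = ?L\<close> by auto
  qed
qed


lemma ce_mem: "x \<in> ce vs i \<longleftrightarrow> x = vs ! i \<or> x = vs ! (Suc i mod length vs)"
  by (simp add: ce_def)

lemma pred_mod:
  assumes "i < L" "k < L"
  shows "(k = Suc i mod L) \<longleftrightarrow> (i = (k + L - 1) mod L)"
proof (cases "Suc i < L")
  case True
  then have sm: "Suc i mod L = Suc i" by simp
  show ?thesis
  proof (cases "k = 0")
    case True
    have "(k + L - 1) mod L = L - 1" using True assms by simp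
    then show ?thesis unfolding sm using True \<open>Suc i < L\<close> by linarith
  next
    case False
    then have "k + L - 1 = (k - 1) + L" by simp
    then have "(k + L - 1) mod L = (k - 1) mod L" by simp
    also have "... = k - 1" using assms(2) by simp
    finally show ?thesis unfolding sm using False by linarith
  qed
next
  case False
  then have "Suc i = L" using assms(1) by simp
  then have sm: "Suc i mod L = 0" by simp
  show ?thesis
  proof (cases "k = 0")
    case True
    have "(k + L - 1) mod L = L - 1" using True assms by simp
    then show ?thesis unfolding sm using True \<open>Suc i = L\<close> by linarith
  next
    case False
    then have "k + L - 1 = (k - 1) + L" by simp
    then have "(k + L - 1) mod L = (k - 1) mod L" by simp
    also have "... = k - 1" using assms(2) by simp
    finally show ?thesis unfolding sm using False \<open>Suc i = L\<close> assms(2) by linarith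
  qed
qed

lemma ce_in_set:
  assumes "i < length vs"
  shows "ce vs i \<subseteq> set vs"
proof -
  have "0 < length vs" using assms by linarith
  then have "Suc i mod length vs < length vs" by (rule mod_less_divisor)
  then show ?thesis using assms by (auto simp: ce_def)
qed

lemma cycle_vertices:
  assumes "3 \<le> length vs"
  shows "\<Union>(cycle_edges vs) = set vs"
proof
  show "\<Union>(cycle_edges vs) \<subseteq> set vs"
    unfolding cycle_edges_ce using ce_in_set by auto
next
  show "set vs \<subseteq> \<Union>(cycle_edges vs)"
  proof
    fix x assume "x \<in> set vs"
    then obtain k where k: "k < length vs" "x = vs ! k" by (auto simp: in_set_conv_nth)
    then have "x \<in> ce vs k" by (simp add: ce_def)
    then show "x \<in> \<Union>(cycle_edges vs)" unfolding cycle_edges_ce using k by auto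
  qed
qed

lemma cycle_deg_idx:
  assumes "distinct vs" "3 \<le> length vs" "k < length vs"
  shows "card {g \<in> cycle_edges vs. vs ! k \<in> g} = 2"
proof -
  let ?L = "length vs"
  let ?p = "(k + ?L - 1) mod ?L"
  have L0: "0 < ?L" using assms by linarith
  have pL: "?p < ?L" using L0 by simp
  have sL: "\<And>i. Suc i mod ?L < ?L" using L0 by simp
  have idx: "{i. i < ?L \<and> vs ! k \<in> ce vs i} = {k, ?p}"
  proof (rule set_eqI, rule iffI)
    fix i assume "i \<in> {i. i < ?L \<and> vs ! k \<in> ce vs i}"
    then have i: "i < ?L" "vs ! k = vs ! i \<or> vs ! k = vs ! (Suc i mod ?L)" by (auto simp: ce_mem)
    then have "k = i \<or> k = Suc i mod ?L"
      using nth_eq_iff_index_eq[OF assms(1) assms(3) i(1)] nth_eq_iff_index_eq[OF assms(1) assms(3) sL[of i]]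
      by blast
    then show "i \<in> {k, ?p}" using pred_mod[OF i(1) assms(3)] by auto
  next
    fix i assume "i \<in> {k, ?p}"
    then show "i \<in> {i. i < ?L \<and> vs ! k \<in> ce vs i}"
    proof
      assume "i = k" then show ?thesis using assms by (simp add: ce_def)
    next
      assume "i \<in> {?p}"
      then have "i = ?p" by simp
      then have "k = Suc i mod ?L" using pred_mod[OF pL assms(3)] by simp
      then show ?thesis using pL \<open>i = ?p\<close> by (simp add: ce_def)
    qed
  qed
  have set: "{g \<in> cycle_edges vs. vs ! k \<in> g} = ce vs ` {i. i < ?L \<and> vs ! k \<in> ce vs i}"
    unfolding cycle_edges_ce by auto
  have kp: "k \<noteq> ?p"
  proof
    assume "k = ?p"
    then have "k = Suc k mod ?L" using pred_mod[OF assms(3) assms(3)] by simp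
    show False
    proof (cases "Suc k < ?L")
      case True then show False using \<open>k = Suc k mod ?L\<close> by simp
    next
      case False
      then have "Suc k = ?L" using assms(3) by simp
      then show False using \<open>k = Suc k mod ?L\<close> assms(2) by simp
    qed
  qed
  have inj: "inj_on (ce vs) {k, ?p}"
    using ce_inj[OF assms(1,2)] assms(3) pL unfolding inj_on_def by blast
  show ?thesis unfolding set idx using card_image[OF inj] kp by simp
qed

lemma cycle_deg:
  assumes "distinct vs" "3 \<le> length vs" "x \<in> set vs"
  shows "card {g \<in> cycle_edges vs. x \<in> g} = 2"
proof -
  obtain k where "k < length vs" "x = vs ! k" using assms(3) by (auto simp: in_set_conv_nth)
  then show ?thesis using assms cycle_deg_idx by blast
qed


lemma mod_split_lt:
  fixes a L :: nat
  assumes "a < 2 * L"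
  shows "a mod L = (if a < L then a else a - L)"
proof (cases "a < L")
  case True then show ?thesis by simp
next
  case False
  then have "a = (a - L) + L" by simp
  then have "a mod L = (a - L) mod L" by (metis mod_add_self2)
  also have "... = a - L" using assms False by simp
  finally show ?thesis using False by simp
qed

lemma cycle_reach_from:
  assumes "distinct vs" "3 \<le> length vs" "i < length vs" "t < length vs"
  shows "(adj (cycle_edges vs - {ce vs i}))\<^sup>*\<^sup>* (vs ! (Suc i mod length vs)) (vs ! ((Suc i + t) mod length vs))"
  using assms(4)
proof (induction t)
  case 0 then show ?case by simp
next
  case (Suc t)
  let ?L = "length vs"
  let ?j = "(Suc i + t) mod ?L"
  have L0: "0 < ?L" using assms by linarith
  have jL: "?j < ?L" using L0 by simp
  have ji: "?j \<noteq> i"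
  proof -
    have "Suc i + t < 2 * ?L" using assms(3) Suc.prems by linarith
    then have eq: "?j = (if Suc i + t < ?L then Suc i + t else Suc i + t - ?L)" by (rule mod_split_lt)
    show ?thesis
    proof (cases "Suc i + t < ?L")
      case True
      then have "?j = Suc i + t" using eq by simp
      then show ?thesis by simp
    next
      case False
      then have "?j = Suc i + t - ?L" using eq by simp
      then show ?thesis using Suc.prems False by linarith
    qed
  qed
  have "ce vs ?j \<noteq> ce vs i" using ce_inj[OF assms(1,2) jL assms(3)] ji by blast
  moreover have "ce vs ?j \<in> cycle_edges vs" unfolding cycle_edges_ce using jL by blast
  ultimately have "ce vs ?j \<in> cycle_edges vs - {ce vs i}" by blast
  moreover have "Suc ?j mod ?L = (Suc i + Suc t) mod ?L" by (simp add: mod_Suc_eq)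
  ultimately have st: "adj (cycle_edges vs - {ce vs i}) (vs ! ?j) (vs ! ((Suc i + Suc t) mod ?L))"
    unfolding adj_def ce_def by simp
  have ih: "(adj (cycle_edges vs - {ce vs i}))\<^sup>*\<^sup>* (vs ! (Suc i mod ?L)) (vs ! ?j)"
    using Suc by simp
  show ?case by (rule rtranclp.rtrancl_into_rtrancl[OF ih st])
qed

lemma reach_idx:
  fixes a j L :: nat
  assumes "a < L" "j < L"
  shows "\<exists>t<L. (a + t) mod L = j"
proof (cases "a \<le> j")
  case True
  then show ?thesis using assms by (intro exI[of _ "j - a"]) simp
next
  case False
  then have "(a + (j + L - a)) = j + L" using assms(1) by simp
  then have "(a + (j + L - a)) mod L = j" using assms by simp
  then show ?thesis using assms False by (intro exI[of _ "j + L - a"]) simp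
qed

lemma cycle_reach_avoid:
  assumes "distinct vs" "3 \<le> length vs" "i < length vs" "x \<in> set vs" "y \<in> set vs"
  shows "(adj (cycle_edges vs - {ce vs i}))\<^sup>*\<^sup>* x y"
proof -
  let ?L = "length vs"
  let ?a = "Suc i mod ?L"
  have L0: "0 < ?L" using assms by linarith
  have aL: "?a < ?L" using L0 by simp
  have base: "(adj (cycle_edges vs - {ce vs i}))\<^sup>*\<^sup>* (vs ! ?a) z" if "z \<in> set vs" for z
  proof -
    from that obtain j where j: "j < ?L" "z = vs ! j" unfolding in_set_conv_nth by blast
    obtain t where t: "t < ?L" "(?a + t) mod ?L = j" using reach_idx[OF aL j(1)] by blast
    have "(Suc i + t) mod ?L = j" using t(2) by (simp add: mod_add_left_eq)
    then show ?thesis using cycle_reach_from[OF assms(1,2,3) t(1)] j by simp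
  qed
  show ?thesis using base[OF assms(4)] base[OF assms(5)] by (meson reach_sym rtranclp_trans)
qed

lemma cycle_reach:
  assumes "distinct vs" "3 \<le> length vs" "x \<in> set vs" "y \<in> set vs"
  shows "(adj (cycle_edges vs))\<^sup>*\<^sup>* x y"
proof -
  have "0 < length vs" using assms by linarith
  then show ?thesis using cycle_reach_avoid[OF assms(1,2) _ assms(3,4)] reach_mono[of "cycle_edges vs - {ce vs 0}" "cycle_edges vs"]
    by blast
qed

lemma only_cycle:
  assumes "distinct ws" "3 \<le> length ws" "distinct vs" "3 \<le> length vs"
    and sub: "cycle_edges ws \<subseteq> cycle_edges vs"
  shows "cycle_edges ws = cycle_edges vs"
proof -
  let ?A = "cycle_edges ws" and ?B = "cycle_edges vs"
  have finB: "finite ?B" unfolding cycle_edges_ce by simp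
  have wv: "set ws \<subseteq> set vs"
    using sub cycle_vertices[OF assms(2)] cycle_vertices[OF assms(4)] by blast
  have loc: "{g \<in> ?B. x \<in> g} \<subseteq> ?A" if "x \<in> set ws" for x
  proof -
    have "{g \<in> ?A. x \<in> g} \<subseteq> {g \<in> ?B. x \<in> g}" using sub by blast
    moreover have "card {g \<in> ?A. x \<in> g} = card {g \<in> ?B. x \<in> g}"
      using cycle_deg[OF assms(1,2) that] cycle_deg[OF assms(3,4)] wv that by auto
    moreover have "finite {g \<in> ?B. x \<in> g}" using finB by simp
    ultimately have "{g \<in> ?A. x \<in> g} = {g \<in> ?B. x \<in> g}" by (simp add: card_subset_eq)
    then show ?thesis by blast
  qed
  have x0: "ws ! 0 \<in> set ws" using assms(2) by (intro nth_mem) linarith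
  have closed: "(adj ?B)\<^sup>*\<^sup>* (ws ! 0) y \<Longrightarrow> y \<in> set ws" for y
  proof (induction rule: rtranclp_induct)
    case base then show ?case using x0 .
  next
    case (step y z)
    then have "{y, z} \<in> ?A" using loc[of y] by (auto simp: adj_def)
    then have "z \<in> \<Union>?A" by blast
    then show ?case using cycle_vertices[OF assms(2)] by simp
  qed
  have vw: "set vs \<subseteq> set ws"
  proof
    fix y assume "y \<in> set vs"
    moreover have "ws ! 0 \<in> set vs" using x0 wv by blast
    ultimately have "(adj ?B)\<^sup>*\<^sup>* (ws ! 0) y" using cycle_reach[OF assms(3,4)] by blast
    then show "y \<in> set ws" by (rule closed)
  qed
  have "?B \<subseteq> ?A"
  proof
    fix g assume "g \<in> ?B"
    then obtain j where j: "j < length vs" "g = ce vs j" unfolding cycle_edges_ce by blast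
    then have "vs ! j \<in> g" by (simp add: ce_def)
    moreover have "vs ! j \<in> set ws" using vw j(1) nth_mem by blast
    ultimately show "g \<in> ?A" using loc \<open>g \<in> ?B\<close> by blast
  qed
  then show ?thesis using sub by blast
qed


fun walk :: "nat set set \<Rightarrow> nat list \<Rightarrow> bool" where
  "walk E [] = True"
| "walk E [x] = True"
| "walk E (x # y # xs) = ({x, y} \<in> E \<and> walk E (y # xs))"

lemma walk_tl: "walk E (x # xs) \<Longrightarrow> walk E xs"
  by (cases xs) auto

lemma walk_append2: "walk E (a @ b) \<Longrightarrow> walk E b"
  by (induction a) (auto dest: walk_tl)

lemma walk_nth: "walk E p \<Longrightarrow> Suc i < length p \<Longrightarrow> {p ! i, p ! Suc i} \<in> E"
proof (induction E p arbitrary: i rule: walk.induct)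
  case (3 E x y xs)
  then show ?case by (cases i) auto
qed auto

lemma path_exists:
  assumes "(adj E)\<^sup>*\<^sup>* u v"
  shows "\<exists>p. p \<noteq> [] \<and> hd p = u \<and> last p = v \<and> distinct p \<and> walk E p"
  using assms
proof (induction rule: converse_rtranclp_induct)
  case base
  then show ?case by (intro exI[of _ "[v]"]) simp
next
  case (step u y)
  then obtain p where p: "p \<noteq> []" "hd p = y" "last p = v" "distinct p" "walk E p" by blast
  show ?case
  proof (cases "u \<in> set p")
    case True
    then obtain a b where ab: "p = a @ u # b" by (meson split_list)
    have "last (u # b) = v" using p(3) ab by simp
    moreover have "distinct (u # b)" using p(4) ab by simp
    moreover have "walk E (u # b)" using p(5) ab walk_append2 by blast
    ultimately show ?thesis by (intro exI[of _ "u # b"]) simp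
  next
    case False
    obtain p' where p': "p = y # p'" using p(1,2) by (cases p) auto
    have "{u, y} \<in> E" using step(1) by (simp add: adj_def)
    then have "walk E (u # p)" using p(5) p' by simp
    then show ?thesis using p False by (intro exI[of _ "u # p"]) simp
  qed
qed

lemma cycle_through:
  assumes e: "{u, v} \<in> E" and uv: "u \<noteq> v" and r: "(adj (E - {{u, v}}))\<^sup>*\<^sup>* u v"
  shows "\<exists>vs. distinct vs \<and> 3 \<le> length vs \<and> cycle_edges vs \<subseteq> E \<and> {u, v} \<in> cycle_edges vs \<and>
           ce vs 0 \<in> cycle_edges vs \<and> ce vs 1 \<in> cycle_edges vs \<and> ce vs 0 \<noteq> ce vs 1 \<and>
           ce vs 0 \<in> E - {{u, v}} \<and> ce vs 1 \<in> E - {{u, v}}"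
proof -
  let ?E' = "E - {{u, v}}"
  obtain p where p: "p \<noteq> []" "hd p = u" "last p = v" "distinct p" "walk ?E' p"
    using path_exists[OF r] by blast
  let ?L = "length p"
  have hd0: "p ! 0 = u" using p(1,2) by (simp add: hd_conv_nth)
  have lastL: "p ! (?L - 1) = v" using p(1,3) by (simp add: last_conv_nth)
  have L2: "2 \<le> ?L"
  proof (rule ccontr)
    assume "\<not> 2 \<le> ?L"
    moreover have "?L \<noteq> 0" using p(1) by simp
    ultimately have "?L = 1" by linarith
    then show False using hd0 lastL uv by simp
  qed
  have L3: "3 \<le> ?L"
  proof (rule ccontr)
    assume "\<not> 3 \<le> ?L"
    then have "?L = 2" using L2 by simp
    then have "{p ! 0, p ! Suc 0} \<in> ?E'" using walk_nth[OF p(5), of 0] by simp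
    moreover have "p ! Suc 0 = v" using lastL \<open>?L = 2\<close> by simp
    ultimately show False using hd0 by simp
  qed
  have inner: "ce p i \<in> ?E'" if "Suc i < ?L" for i
  proof -
    have "Suc i mod ?L = Suc i" using that by simp
    then show ?thesis unfolding ce_def using walk_nth[OF p(5) that] by simp
  qed
  have last_e: "ce p (?L - 1) = {u, v}"
  proof -
    have "Suc (?L - 1) = ?L" using L3 by simp
    then have "Suc (?L - 1) mod ?L = 0" by simp
    then show ?thesis unfolding ce_def using hd0 lastL by auto
  qed
  have sub: "cycle_edges p \<subseteq> E"
  proof
    fix g assume "g \<in> cycle_edges p"
    then obtain i where i: "i < ?L" "g = ce p i" unfolding cycle_edges_ce by blast
    show "g \<in> E"
    proof (cases "Suc i < ?L")
      case True then show ?thesis using inner i by blast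
    next
      case False then have "i = ?L - 1" using i by simp
      then show ?thesis using i last_e e by simp
    qed
  qed
  have "{u, v} \<in> cycle_edges p" unfolding cycle_edges_ce using last_e L3
    by (metis diff_less image_eqI lessThan_iff less_numeral_extra(1) order_less_le_trans zero_less_numeral)
  moreover have "ce p 0 \<in> cycle_edges p" "ce p 1 \<in> cycle_edges p"
    unfolding cycle_edges_ce using L3 by auto
  moreover have "ce p 0 \<noteq> ce p 1"
  proof
    assume "ce p 0 = ce p 1"
    moreover have "0 < ?L" "1 < ?L" using L3 by linarith+
    ultimately have "(0::nat) = 1" using ce_inj[OF p(4) L3] by blast
    then show False by simp
  qed
  moreover have "ce p 0 \<in> ?E'" "ce p 1 \<in> ?E'" using inner L3 by auto
  ultimately show ?thesis using p(4) L3 sub by blast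
qed

definition NC :: "nat set set \<Rightarrow> nat set set" where
  "NC E = {g \<in> E. \<not> on_cycle E g}"

lemma is_cycle_mono: "is_cycle F C \<Longrightarrow> F \<subseteq> E \<Longrightarrow> is_cycle E C"
  unfolding is_cycle_def by blast

lemma on_cycle_mono: "on_cycle F g \<Longrightarrow> F \<subseteq> E \<Longrightarrow> on_cycle E g"
  unfolding on_cycle_def using is_cycle_mono by meson

lemma is_cycle_sub: "is_cycle E C \<Longrightarrow> C \<subseteq> E"
  unfolding is_cycle_def by blast

lemma simple_finite: "finite V \<Longrightarrow> simple_graph V E \<Longrightarrow> finite E"
proof -
  assume "finite V" "simple_graph V E"
  have "E \<subseteq> Pow V"
  proof
    fix e assume "e \<in> E"
    then obtain u v where "e = {u, v}" "u \<in> V" "v \<in> V"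
      using \<open>simple_graph V E\<close> unfolding simple_graph_def by blast
    then show "e \<in> Pow V" by simp
  qed
  then show "finite E" using \<open>finite V\<close> finite_subset by blast
qed

lemma reach_empty: "(adj {})\<^sup>*\<^sup>* x y \<Longrightarrow> y = x"
  by (induction rule: rtranclp_induct) (auto simp: adj_def)

lemma component_empty: "component {} x = {x}"
  unfolding component_def using reach_empty by auto

lemma reach_insert_same:
  assumes r: "(adj F)\<^sup>*\<^sup>* u v"
  shows "(adj (insert {u, v} F))\<^sup>*\<^sup>* a b \<Longrightarrow> (adj F)\<^sup>*\<^sup>* a b"
proof (induction rule: rtranclp_induct)
  case base then show ?case by simp
next
  case (step y z)
  have "(adj F)\<^sup>*\<^sup>* y z"
  proof (cases "{y, z} = {u, v}")
    case True
    then have "(y = u \<and> z = v) \<or> (y = v \<and> z = u)" by (auto simp: doubleton_eq_iff)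
    then show ?thesis using r reach_sym by blast
  next
    case False
    then have "{y, z} \<in> F" using step(2) by (simp add: adj_def)
    then show ?thesis by (rule reach_edge)
  qed
  then show ?case by (rule rtranclp_trans[OF step(3)])
qed

lemma card_image_less:
  assumes "finite A" "x \<in> A" "y \<in> A" "x \<noteq> y" "h x = h y"
  shows "card (h ` A) < card A"
proof -
  have "\<not> inj_on h A" using assms unfolding inj_on_def by blast
  then have "card (h ` A) \<noteq> card A" using inj_on_iff_eq_card[OF assms(1)] by blast
  moreover have "card (h ` A) \<le> card A" using assms(1) by (rule card_image_le)
  ultimately show ?thesis by simp
qed


lemma K_bound:
  assumes "finite V" "finite E" "simple_graph V E" "cp E"
  shows "2 * card E + 3 * card (component E ` V) + card (NC E) \<le> 3 * card V"
  using assms(2,3,4)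
proof (induction E rule: finite_induct)
  case empty
  have "component {} ` V = (\<lambda>x. {x}) ` V" using component_empty by simp
  moreover have "card ((\<lambda>x. {x}) ` V) = card V" by (rule card_image) (simp add: inj_on_def)
  moreover have "NC {} = {}" by (simp add: NC_def)
  ultimately show ?case by simp
next
  case (insert e F)
  let ?E = "insert e F"
  obtain u v where e: "e = {u, v}" "u \<noteq> v" "u \<in> V" "v \<in> V"
  proof -
    have "\<exists>u v. e = {u, v} \<and> u \<noteq> v \<and> u \<in> V \<and> v \<in> V"
      using insert.prems(1) unfolding simple_graph_def by simp
    then show ?thesis using that by blast
  qed
  have sF: "simple_graph V F" using insert.prems(1) unfolding simple_graph_def by simp
  have cpF: "cp F"
    unfolding cp_def
  proof (intro ballI allI impI)
    fix g C1 C2 assume g: "g \<in> F" and h: "is_cycle F C1 \<and> is_cycle F C2 \<and> g \<in> C1 \<and> g \<in> C2"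
    then have "is_cycle ?E C1" "is_cycle ?E C2" using is_cycle_mono[of F _ ?E] by auto
    then show "C1 = C2" using insert.prems(2) g h unfolding cp_def by blast
  qed
  have IH: "2 * card F + 3 * card (component F ` V) + card (NC F) \<le> 3 * card V"
    using insert.IH sF cpF by blast
  have cE: "card ?E = Suc (card F)" using insert.hyps by simp
  have finNCF: "finite (NC F)" using insert.hyps(1) unfolding NC_def by simp
  have NCsub: "g \<in> F \<and> g \<in> NC F" if "g \<in> NC ?E" "g \<noteq> e" for g
  proof -
    have "g \<in> F" using that unfolding NC_def by simp
    moreover have "\<not> on_cycle F g" using that on_cycle_mono[of F g ?E] unfolding NC_def by blast
    ultimately show ?thesis unfolding NC_def by simp
  qed
  show ?case
  proof (cases "(adj F)\<^sup>*\<^sup>* u v")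
    case True
    have FE: "?E - {{u, v}} = F" using insert.hyps(2) e(1) by blast
    obtain vs where vs: "distinct vs" "3 \<le> length vs" "cycle_edges vs \<subseteq> ?E" "{u, v} \<in> cycle_edges vs"
      "ce vs 0 \<in> cycle_edges vs" "ce vs 1 \<in> cycle_edges vs" "ce vs 0 \<noteq> ce vs 1"
      "ce vs 0 \<in> F" "ce vs 1 \<in> F"
    proof -
      have r: "(adj (?E - {{u, v}}))\<^sup>*\<^sup>* u v" using True FE by simp
      have "{u, v} \<in> ?E" using e(1) by simp
      from cycle_through[OF this e(2) r] show ?thesis using FE that by blast
    qed
    let ?C = "cycle_edges vs"
    have cyc: "is_cycle ?E ?C" unfolding is_cycle_def using vs by blast
    have fNC: "f \<in> NC F" if "f \<in> ?C" "f \<in> F" for f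
    proof -
      have "\<not> on_cycle F f"
      proof
        assume "on_cycle F f"
        then obtain C' where C': "is_cycle F C'" "f \<in> C'" unfolding on_cycle_def by blast
        then have "is_cycle ?E C'" using is_cycle_mono by blast
        then have "C' = ?C" using insert.prems(2) cyc C'(2) that unfolding cp_def by blast
        then have "e \<in> C'" using vs(4) e(1) by simp
        then show False using is_cycle_sub[OF C'(1)] insert.hyps(2) by blast
      qed
      then show ?thesis using that unfolding NC_def by simp
    qed
    have "NC ?E \<subseteq> NC F - {ce vs 0, ce vs 1}"
    proof
      fix g assume g: "g \<in> NC ?E"
      have "\<forall>f\<in>?C. f \<notin> NC ?E" using cyc unfolding NC_def on_cycle_def by blast
      then have "g \<noteq> e" "g \<noteq> ce vs 0" "g \<noteq> ce vs 1" using g vs(4,5,6) e(1) by blast+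
      then show "g \<in> NC F - {ce vs 0, ce vs 1}" using NCsub[OF g] by blast
    qed
    then have "card (NC ?E) \<le> card (NC F - {ce vs 0, ce vs 1})"
      using finNCF by (simp add: card_mono)
    also have "... = card (NC F) - card {ce vs 0, ce vs 1}"
    proof (rule card_Diff_subset)
      show "finite {ce vs 0, ce vs 1}" by simp
      show "{ce vs 0, ce vs 1} \<subseteq> NC F" using fNC vs(5,6,8,9) by blast
    qed
    also have "... = card (NC F) - 2" using vs(7) by simp
    finally have c0: "card (NC ?E) \<le> card (NC F) - 2" .
    have "card {ce vs 0, ce vs 1} = 2" using vs(7) by simp
    moreover have "card {ce vs 0, ce vs 1} \<le> card (NC F)"
      using fNC vs(5,6,8,9) finNCF by (intro card_mono) auto
    ultimately have c1: "card (NC ?E) + 2 \<le> card (NC F)" using c0 by linarith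
    have "component ?E x = component F x" for x
    proof -
      have "(adj ?E)\<^sup>*\<^sup>* x w \<longleftrightarrow> (adj F)\<^sup>*\<^sup>* x w" for w
      proof
        assume "(adj ?E)\<^sup>*\<^sup>* x w"
        then show "(adj F)\<^sup>*\<^sup>* x w" using reach_insert_same[OF True] e(1) by simp
      next
        assume "(adj F)\<^sup>*\<^sup>* x w"
        then show "(adj ?E)\<^sup>*\<^sup>* x w" using reach_mono[of F ?E] by blast
      qed
      then show ?thesis unfolding component_def by auto
    qed
    then have "component ?E ` V = component F ` V" by simp
    then show ?thesis using IH cE c1 by simp
  next
    case False
    have c1: "card (NC ?E) \<le> Suc (card (NC F))"
    proof -
      have "NC ?E \<subseteq> insert e (NC F)" using NCsub by blast
      then have "card (NC ?E) \<le> card (insert e (NC F))" using finNCF by (simp add: card_mono)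
      also have "... \<le> Suc (card (NC F))" by (simp add: card_insert_le_m1)
      finally show ?thesis .
    qed
    let ?h = "\<lambda>S. \<Union>(component ?E ` S)"
    have hc: "?h (component F x) = component ?E x" for x
    proof
      show "component ?E x \<subseteq> ?h (component F x)"
        unfolding component_def by blast
      show "?h (component F x) \<subseteq> component ?E x"
      proof
        fix w assume "w \<in> ?h (component F x)"
        then obtain y where y: "y \<in> component F x" "w \<in> component ?E y" by blast
        have "(adj ?E)\<^sup>*\<^sup>* x y" using y(1) reach_mono[of F ?E] unfolding component_def by blast
        then show "w \<in> component ?E x" using y(2) comp_eq by blast
      qed
    qed
    have img: "component ?E ` V = ?h ` (component F ` V)"
      using hc by (simp add: image_image)
    have ne: "component F u \<noteq> component F v"
    proof
      assume "component F u = component F v"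
      moreover have "v \<in> component F v" unfolding component_def by simp
      ultimately show False using False unfolding component_def by blast
    qed
    have "?h (component F u) = ?h (component F v)"
      unfolding hc using comp_eq[OF reach_edge[of u v ?E]] e(1) by simp
    then have "card (component ?E ` V) < card (component F ` V)"
      unfolding img using card_image_less[of "component F ` V" "component F u" "component F v" ?h]
        assms(1) e ne by blast
    then show ?thesis using IH cE c1 by simp
  qed
qed

lemma handshake:
  assumes "finite V" "simple_graph V E"
  shows "(\<Sum>v\<in>V. deg E v) = 2 * card E"
proof -
  have fE: "finite E" using simple_finite assms by blast
  have "(\<Sum>v\<in>V. deg E v) = (\<Sum>v\<in>V. \<Sum>e\<in>E. of_bool (v \<in> e))"
  proof (rule sum.cong)
    fix v assume "v \<in> V"
    have "{e \<in> E. v \<in> e} = E \<inter> {e. v \<in> e}" by auto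
    then show "deg E v = (\<Sum>e\<in>E. of_bool (v \<in> e))" unfolding deg_def using fE by simp
  qed simp
  also have "... = (\<Sum>e\<in>E. \<Sum>v\<in>V. of_bool (v \<in> e))" by (rule sum.swap)
  also have "... = (\<Sum>e\<in>E. 2)"
  proof (rule sum.cong)
    fix e assume "e \<in> E"
    then obtain u w where uw: "e = {u, w}" "u \<noteq> w" "u \<in> V" "w \<in> V"
      using assms(2) unfolding simple_graph_def by blast
    have "V \<inter> {v. v \<in> e} = {u, w}" using uw by auto
    then show "(\<Sum>v\<in>V. of_bool (v \<in> e)) = (2::nat)" using assms(1) uw(2) by simp
  qed simp
  finally show ?thesis by simp
qed

lemma cycle_vertex_deg:
  assumes "finite E" "is_cycle E C" "x \<in> \<Union>C"
  shows "2 \<le> deg E x"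
proof -
  obtain vs where vs: "distinct vs" "3 \<le> length vs" "C = cycle_edges vs" "C \<subseteq> E"
    using assms(2) unfolding is_cycle_def by blast
  have "x \<in> set vs" using assms(3) cycle_vertices[OF vs(2)] vs(3) by simp
  then have "card {g \<in> C. x \<in> g} = 2" using cycle_deg[OF vs(1,2)] vs(3) by simp
  moreover have "card {g \<in> C. x \<in> g} \<le> deg E x"
    unfolding deg_def using vs(4) assms(1) by (intro card_mono) auto
  ultimately show ?thesis by simp
qed

lemma cycle_in_comp:
  assumes "is_cycle E C" "x \<in> \<Union>C"
  shows "has_cycle_in E (component E x)"
proof -
  obtain vs where vs: "distinct vs" "3 \<le> length vs" "C = cycle_edges vs" "C \<subseteq> E"
    using assms(1) unfolding is_cycle_def by blast
  have xs: "x \<in> set vs" using assms(2) cycle_vertices[OF vs(2)] vs(3) by simp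
  have "\<Union>C \<subseteq> component E x"
  proof
    fix y assume "y \<in> \<Union>C"
    then have "y \<in> set vs" using cycle_vertices[OF vs(2)] vs(3) by simp
    then have "(adj C)\<^sup>*\<^sup>* x y" using cycle_reach[OF vs(1,2) xs] vs(3) by simp
    then have "(adj E)\<^sup>*\<^sup>* x y" using reach_mono[OF vs(4)] by blast
    then show "y \<in> component E x" unfolding component_def by simp
  qed
  then show ?thesis unfolding has_cycle_in_def using assms(1) by blast
qed

lemma bridge_of_nc:
  assumes "{u, v} \<in> E" "u \<noteq> v" "u \<in> V" "v \<in> V" "\<not> on_cycle E {u, v}"
  shows "is_bridge V E {u, v}"
proof -
  have "\<not> connected_graph V (E - {{u, v}})"
  proof
    assume "connected_graph V (E - {{u, v}})"
    then have "(adj (E - {{u, v}}))\<^sup>*\<^sup>* u v" using assms(3,4) unfolding connected_graph_def by blast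
    from cycle_through[OF assms(1,2) this] obtain vs where
      "distinct vs" "3 \<le> length vs" "cycle_edges vs \<subseteq> E" "{u, v} \<in> cycle_edges vs" by blast
    then have "on_cycle E {u, v}" unfolding on_cycle_def is_cycle_def by blast
    then show False using assms(5) by simp
  qed
  then show ?thesis unfolding is_bridge_def using assms(1) by simp
qed

lemma walk_reach: "walk E p \<Longrightarrow> p \<noteq> [] \<Longrightarrow> (adj E)\<^sup>*\<^sup>* (hd p) (last p)"
proof (induction E p rule: walk.induct)
  case (3 E x y xs)
  then have "(adj E)\<^sup>*\<^sup>* y (last (y # xs))" by simp
  moreover have "adj E x y" using 3 by (simp add: adj_def)
  ultimately show ?case by (simp add: converse_rtranclp_into_rtranclp)
qed auto

lemma walk_avoid: "walk E p \<Longrightarrow> a \<notin> set p \<Longrightarrow> a \<in> g \<Longrightarrow> walk (E - {g}) p"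
proof (induction E p rule: walk.induct)
  case (3 E x y xs)
  then have "{x, y} \<noteq> g" by auto
  then show ?case using 3 by simp
qed auto

lemma connected_one_comp:
  assumes "connected_graph V E"
  shows "card (component E ` V) = 1"
proof -
  obtain x0 where x0: "x0 \<in> V" using assms unfolding connected_graph_def by blast
  have "component E ` V = {component E x0}"
  proof -
    have "component E x = component E x0" if "x \<in> V" for x
      using assms x0 that comp_eq unfolding connected_graph_def by metis
    then show ?thesis using x0 by blast
  qed
  then show ?thesis by simp
qed

lemma leaf_edge:
  assumes "deg E x = 1"
  obtains g where "g \<in> E" "x \<in> g" "\<And>h. h \<in> E \<Longrightarrow> x \<in> h \<Longrightarrow> h = g"
proof -
  obtain g where g: "{h \<in> E. x \<in> h} = {g}" using assms unfolding deg_def by (meson card_1_singletonE)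
  have "g \<in> E" "x \<in> g" using g by auto
  moreover have "\<And>h. h \<in> E \<Longrightarrow> x \<in> h \<Longrightarrow> h = g" using g by auto
  ultimately show ?thesis by (rule that)
qed

lemma N1:
  assumes fin: "finite V" and cac: "cactus V E" and n3: "3 \<le> card V"
  shows "2 * card E + card {v \<in> V. deg E v = 1} + 3 \<le> 3 * card V"
proof -
  have sg: "simple_graph V E" and con: "connected_graph V E" and cpE: "cp E"
    using cac unfolding cactus_def cp_def by auto
  have fE: "finite E" using simple_finite fin sg by blast
  have K: "2 * card E + 3 * card (component E ` V) + card (NC E) \<le> 3 * card V"
    using K_bound[OF fin fE sg cpE] .
  have k1: "card (component E ` V) = 1" using connected_one_comp[OF con] .
  let ?L = "{v \<in> V. deg E v = 1}"
  define f where "f x = (SOME g. g \<in> E \<and> x \<in> g)" for x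
  have fprop: "f x \<in> E \<and> x \<in> f x \<and> (\<forall>h. h \<in> E \<and> x \<in> h \<longrightarrow> h = f x)" if "x \<in> ?L" for x
  proof -
    from that have d1: "deg E x = 1" by simp
    obtain g where g: "g \<in> E" "x \<in> g" "\<And>h. h \<in> E \<Longrightarrow> x \<in> h \<Longrightarrow> h = g"
      using leaf_edge[OF d1] by blast
    then have "f x = g" unfolding f_def by (metis (mono_tags, lifting) someI_ex)
    then show ?thesis using g by blast
  qed
  have fNC: "f x \<in> NC E" if "x \<in> ?L" for x
  proof -
    have "\<not> on_cycle E (f x)"
    proof
      assume "on_cycle E (f x)"
      then obtain C where "is_cycle E C" "f x \<in> C" unfolding on_cycle_def by blast
      moreover have "x \<in> f x" using fprop[OF that] by blast
      ultimately have "2 \<le> deg E x" using cycle_vertex_deg[OF fE] by blast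
      then show False using that by simp
    qed
    then show ?thesis using fprop[OF that] unfolding NC_def by blast
  qed
  have inj: "inj_on f ?L"
  proof (rule inj_onI, rule ccontr)
    fix x y assume x: "x \<in> ?L" and y: "y \<in> ?L" and fxy: "f x = f y" and ne: "x \<noteq> y"
    have gx: "f x \<in> E" "x \<in> f x" "y \<in> f x" using fprop[OF x] fprop[OF y] fxy by auto
    obtain a b where ab: "f x = {a, b}" using sg gx(1) unfolding simple_graph_def by blast
    have fx: "f x = {x, y}" using ab gx ne by auto
    have only: "\<And>z h. z \<in> {x, y} \<Longrightarrow> h \<in> E \<Longrightarrow> z \<in> h \<Longrightarrow> h = {x, y}"
      using fprop[OF x] fprop[OF y] fxy fx by auto
    have cl: "(adj E)\<^sup>*\<^sup>* x z \<Longrightarrow> z \<in> {x, y}" for z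
    proof (induction rule: rtranclp_induct)
      case base then show ?case by simp
    next
      case (step z w)
      then have "{z, w} \<in> E" by (simp add: adj_def)
      then have "{z, w} = {x, y}" using only[OF step(3)] by blast
      then show ?case by blast
    qed
    have "V \<subseteq> {x, y}"
    proof
      fix z assume "z \<in> V"
      then have "(adj E)\<^sup>*\<^sup>* x z" using con x unfolding connected_graph_def by blast
      then show "z \<in> {x, y}" by (rule cl)
    qed
    then have "card V \<le> card {x, y}" by (simp add: card_mono)
    also have "... \<le> 2" by (simp add: card_insert_le_m1)
    finally show False using n3 by simp
  qed
  have "card ?L \<le> card (NC E)"
  proof (rule card_inj_on_le[OF inj])
    show "f ` ?L \<subseteq> NC E" using fNC by blast
    show "finite (NC E)" using fE unfolding NC_def by simp
  qed
  then show ?thesis using K k1 by simp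
qed


lemma edge_form:
  assumes "simple_graph V E" "g \<in> E"
  obtains a b where "g = {a, b}" "a \<noteq> b" "a \<in> V" "b \<in> V"
proof -
  have "\<exists>a b. g = {a, b} \<and> a \<noteq> b \<and> a \<in> V \<and> b \<in> V"
    using assms unfolding simple_graph_def by simp
  then show ?thesis using that by blast
qed

lemma cycle_remove:
  assumes "is_cycle E C" "g \<notin> C"
  shows "is_cycle (E - {g}) C"
  using assms unfolding is_cycle_def by blast

lemma sum_bool_card:
  assumes "finite V" "A \<subseteq> V"
  shows "(\<Sum>v\<in>V. (of_bool (v \<in> A)::nat)) = card A"
proof -
  have "V \<inter> {v. v \<in> A} = A" using assms(2) by blast
  then show ?thesis using assms(1) by simp
qed

lemma cp_unique:
  assumes "cp E" "is_cycle E C1" "is_cycle E C2" "g \<in> C1" "g \<in> C2"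
  shows "C1 = C2"
proof -
  have "g \<in> E" using assms(2,4) is_cycle_sub by blast
  then show ?thesis using assms unfolding cp_def by blast
qed

lemma N2:
  assumes fin: "finite V" and core: "core_cactus V E" and pos: "\<forall>v\<in>V. 1 \<le> deg E v"
  shows "card {v \<in> V. odd (deg E v) \<and> 1 < deg E v} \<le> card {v \<in> V. deg E v = 1}"
proof -
  have cac: "cactus V E" using core unfolding core_cactus_def by simp
  have sg: "simple_graph V E" and con: "connected_graph V E" and cpE: "cp E"
    using cac unfolding cactus_def cp_def by auto
  have fE: "finite E" using simple_finite fin sg by blast
  have nob: "\<not> (is_bridge V E {u, v} \<and> has_cycle_in (E - {{u, v}}) (component (E - {{u, v}}) u) \<and>
            has_cycle_in (E - {{u, v}}) (component (E - {{u, v}}) v))" for u v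
    using core unfolding core_cactus_def by blast
  define Z where "Z = {v \<in> V. \<exists>C. is_cycle E C \<and> v \<in> \<Union>C}"
  define W where "W = V - Z"
  define H where "H = {g \<in> E. g \<inter> W \<noteq> {}}"
  let ?O = "{v \<in> V. odd (deg E v) \<and> 1 < deg E v}"
  let ?L = "{v \<in> V. deg E v = 1}"
  have ZV: "Z \<subseteq> V" unfolding Z_def by blast
  have HE: "H \<subseteq> E" unfolding H_def by blast
  have fH: "finite H" using fE HE finite_subset by blast
  have sH: "simple_graph V H" using sg HE unfolding simple_graph_def by blast
  have side: "has_cycle_in (E - {g}) (component (E - {g}) x)"
    if xZ: "x \<in> Z" and ncg: "\<not> on_cycle E g" for x g
  proof -
    obtain C where C: "is_cycle E C" "x \<in> \<Union>C" using xZ unfolding Z_def by blast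
    have "g \<notin> C" using ncg C(1) unfolding on_cycle_def by blast
    then have "is_cycle (E - {g}) C" using cycle_remove C(1) by blast
    then show ?thesis using cycle_in_comp C(2) by blast
  qed
  have ZZ: "on_cycle E {a, b}" if "{a, b} \<in> E" "a \<noteq> b" "a \<in> Z" "b \<in> Z" for a b
  proof (rule ccontr)
    assume nc: "\<not> on_cycle E {a, b}"
    have "is_bridge V E {a, b}" using bridge_of_nc[OF that(1,2) _ _ nc] that(3,4) ZV by blast
    then show False using nob[of a b] side[OF that(3) nc] side[OF that(4) nc] by blast
  qed
  have Wnc: "\<not> on_cycle E g" if wh: "g \<in> E" "w \<in> g" "w \<in> W" for g w
  proof
    assume "on_cycle E g"
    then obtain C where "is_cycle E C" "g \<in> C" unfolding on_cycle_def by blast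
    then have "w \<in> Z" using wh W_def unfolding Z_def by blast
    then show False using wh(3) W_def by blast
  qed
  have Hnc: "\<not> is_cycle H C" for C
  proof
    assume hc: "is_cycle H C"
    then obtain vs where vs: "distinct vs" "3 \<le> length vs" "C = cycle_edges vs" "C \<subseteq> H"
      unfolding is_cycle_def by blast
    have "ce vs 0 \<in> C" using vs(2,3) unfolding cycle_edges_ce by auto
    then have "ce vs 0 \<in> H" using vs(4) by blast
    then obtain w where w: "w \<in> ce vs 0" "w \<in> W" unfolding H_def by blast
    have "is_cycle E C" using hc HE is_cycle_mono by blast
    then have "on_cycle E (ce vs 0)" using \<open>ce vs 0 \<in> C\<close> unfolding on_cycle_def by blast
    then show False using Wnc[OF _ w(1,2)] \<open>ce vs 0 \<in> H\<close> HE by blast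
  qed
  have cpH: "cp H" using Hnc unfolding cp_def by blast
  have NCH: "NC H = H" using Hnc unfolding NC_def on_cycle_def by blast
  have KH: "2 * card H + 3 * card (component H ` V) + card H \<le> 3 * card V"
    using K_bound[OF fin fH sH cpH] NCH by simp
  have inj: "inj_on (component H) Z"
  proof (rule inj_onI, rule ccontr)
    fix z1 z2 assume z1: "z1 \<in> Z" and z2: "z2 \<in> Z" and eq: "component H z1 = component H z2"
      and ne: "z1 \<noteq> z2"
    have "z2 \<in> component H z1" using eq unfolding component_def by simp
    then have "(adj H)\<^sup>*\<^sup>* z1 z2" unfolding component_def by simp
    then obtain p where p: "p \<noteq> []" "hd p = z1" "last p = z2" "distinct p" "walk H p"
      using path_exists by blast
    obtain b rest where pb: "p = z1 # b # rest"
    proof (cases p)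
      case Nil then show ?thesis using p by simp
    next
      case (Cons a q)
      then have a: "a = z1" using p by simp
      show ?thesis
      proof (cases q)
        case Nil then show ?thesis using Cons p a ne by simp
      next
        case (Cons b rest) then show ?thesis using \<open>p = a # q\<close> a that by simp
      qed
    qed
    let ?g = "{z1, b}"
    have gH: "?g \<in> H" using p(5) pb by simp
    have gE: "?g \<in> E" using gH HE by blast
    have zb: "z1 \<noteq> b" using p(4) pb by simp
    obtain w where w: "w \<in> ?g" "w \<in> W" using gH unfolding H_def by blast
    have nc: "\<not> on_cycle E ?g" using Wnc[OF gE w] .
    have bV: "b \<in> V"
      using edge_form[OF sg gE] zb by (metis doubleton_eq_iff)
    have br: "is_bridge V E ?g" using bridge_of_nc[OF gE zb _ bV nc] z1 ZV by blast
    have s1: "has_cycle_in (E - {?g}) (component (E - {?g}) z1)" using side[OF z1 nc] .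
    have wt: "walk H (b # rest)" using p(5) pb walk_tl by blast
    have "z1 \<notin> set (b # rest)" using p(4) pb by simp
    then have "walk (H - {?g}) (b # rest)" using walk_avoid[OF wt] by blast
    then have "(adj (H - {?g}))\<^sup>*\<^sup>* b z2" using walk_reach[of "H - {?g}" "b # rest"] p(3) pb by simp
    then have "(adj (E - {?g}))\<^sup>*\<^sup>* b z2" using reach_mono[of "H - {?g}" "E - {?g}"] HE by blast
    then have "component (E - {?g}) b = component (E - {?g}) z2" by (rule comp_eq)
    then have s2: "has_cycle_in (E - {?g}) (component (E - {?g}) b)" using side[OF z2 nc] by simp
    show False using nob[of z1 b] br s1 s2 by blast
  qed
  have cZ: "card Z \<le> card (component H ` V)"
  proof -
    have "card Z = card (component H ` Z)" using card_image[OF inj] by simp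
    also have "... \<le> card (component H ` V)" using ZV fin by (intro card_mono) auto
    finally show ?thesis .
  qed
  have cW: "card W = card V - card Z" unfolding W_def using ZV fin by (simp add: card_Diff_subset finite_subset)
  have HW: "card H \<le> card W" using KH cZ cW ZV fin card_mono[OF fin ZV] by linarith
  have hs: "(\<Sum>v\<in>V. deg H v) = 2 * card H" using handshake[OF fin sH] .
  have degW: "deg H v = deg E v" if "v \<in> W" for v
  proof -
    have "{g \<in> H. v \<in> g} = {g \<in> E. v \<in> g}" using that unfolding H_def by auto
    then show ?thesis unfolding deg_def by simp
  qed
  have Zdeg: "odd (deg E v) \<Longrightarrow> 1 \<le> deg H v" if vZ: "v \<in> Z" for v
  proof -
    define A where "A = {g \<in> E. v \<in> g \<and> g \<notin> H}"
    define CC where "CC = {C. is_cycle E C \<and> v \<in> \<Union>C}"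
    have fCC: "finite CC"
    proof -
      have "CC \<subseteq> Pow E" using is_cycle_sub unfolding CC_def by blast
      then show ?thesis using fE finite_subset by blast
    qed
    have Aeq: "A = (\<Union>C\<in>CC. {g \<in> C. v \<in> g})"
    proof
      show "A \<subseteq> (\<Union>C\<in>CC. {g \<in> C. v \<in> g})"
      proof
        fix g assume g: "g \<in> A"
        then have gE: "g \<in> E" "v \<in> g" "g \<notin> H" unfolding A_def by auto
        obtain a b where ab: "g = {a, b}" "a \<noteq> b" "a \<in> V" "b \<in> V" using edge_form[OF sg gE(1)] by blast
        have "a \<notin> W" "b \<notin> W" using gE(1,3) ab(1) unfolding H_def by auto
        then have "a \<in> Z" "b \<in> Z" using ab(3,4) unfolding W_def by auto
        then have "on_cycle E g" using ZZ[of a b] ab gE(1) by simp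
        then obtain C where "is_cycle E C" "g \<in> C" unfolding on_cycle_def by blast
        then show "g \<in> (\<Union>C\<in>CC. {g \<in> C. v \<in> g})" using gE(2) unfolding CC_def by blast
      qed
    next
      show "(\<Union>C\<in>CC. {g \<in> C. v \<in> g}) \<subseteq> A"
      proof
        fix g assume "g \<in> (\<Union>C\<in>CC. {g \<in> C. v \<in> g})"
        then obtain C where C: "is_cycle E C" "g \<in> C" "v \<in> g" unfolding CC_def by blast
        have gE: "g \<in> E" using C is_cycle_sub by blast
        have "g \<inter> W = {}"
        proof -
          have "x \<in> Z" if xg: "x \<in> g" for x
          proof -
            obtain a b where ab: "g = {a, b}" "a \<in> V" "b \<in> V" using edge_form[OF sg gE] by blast
            have "x \<in> V" using xg ab by auto
            then show ?thesis using C xg unfolding Z_def by blast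
          qed
          then show ?thesis unfolding W_def by blast
        qed
        then show "g \<in> A" unfolding A_def H_def using gE C(3) by blast
      qed
    qed
    have c2: "card {g \<in> C. v \<in> g} = 2" if CC: "C \<in> CC" for C
    proof -
      obtain vs where vs: "distinct vs" "3 \<le> length vs" "C = cycle_edges vs"
        using CC unfolding CC_def is_cycle_def by blast
      have "v \<in> set vs" using CC vs(2,3) cycle_vertices unfolding CC_def by blast
      then show ?thesis using cycle_deg[OF vs(1,2)] vs(3) by simp
    qed
    have "card A = (\<Sum>C\<in>CC. card {g \<in> C. v \<in> g})"
      unfolding Aeq
    proof (rule card_UN_disjoint[OF fCC])
      show "\<forall>C\<in>CC. finite {g \<in> C. v \<in> g}"
      proof
        fix C assume "C \<in> CC"
        then have "C \<subseteq> E" using is_cycle_sub unfolding CC_def by blast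
        then have "finite C" using fE finite_subset by blast
        then show "finite {g \<in> C. v \<in> g}" by simp
      qed
      show "\<forall>C1\<in>CC. \<forall>C2\<in>CC. C1 \<noteq> C2 \<longrightarrow> {g \<in> C1. v \<in> g} \<inter> {g \<in> C2. v \<in> g} = {}"
      proof (intro ballI impI)
        fix C1 C2 assume c: "C1 \<in> CC" "C2 \<in> CC" "C1 \<noteq> C2"
        have "is_cycle E C1" "is_cycle E C2" using c unfolding CC_def by auto
        then show "{g \<in> C1. v \<in> g} \<inter> {g \<in> C2. v \<in> g} = {}"
          using cp_unique[OF cpE] c(3) by blast
      qed
    qed
    also have "... = (\<Sum>C\<in>CC. 2)" using c2 by simp
    finally have evA: "even (card A)" by simp
    have "{g \<in> E. v \<in> g} = {g \<in> H. v \<in> g} \<union> A" unfolding A_def using HE by blast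
    moreover have "{g \<in> H. v \<in> g} \<inter> A = {}" unfolding A_def by blast
    moreover have "finite A" "finite {g \<in> H. v \<in> g}" unfolding A_def using fE fH by auto
    ultimately have "deg E v = deg H v + card A" unfolding deg_def by (simp add: card_Un_disjoint)
    then show "odd (deg E v) \<Longrightarrow> 1 \<le> deg H v" using evA by (cases "deg H v") auto
  qed
  have pv: "2 * of_bool (v \<in> W) + of_bool (v \<in> ?O) \<le> deg H v + of_bool (v \<in> ?L)" if vV: "v \<in> V" for v
  proof (cases "v \<in> W")
    case True
    then have d: "deg H v = deg E v" by (rule degW)
    have "1 \<le> deg E v" using pos vV by blast
    then show ?thesis using True d vV by (cases "deg E v = 1"; cases "odd (deg E v)"; cases "deg E v = 2") auto
  next
    case False
    then have vZ: "v \<in> Z" using vV unfolding W_def by blast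
    then obtain C where "is_cycle E C" "v \<in> \<Union>C" unfolding Z_def by blast
    then have "2 \<le> deg E v" using cycle_vertex_deg[OF fE] by blast
    then show ?thesis using False Zdeg[OF vZ] vV by auto
  qed
  have "(\<Sum>v\<in>V. 2 * of_bool (v \<in> W) + of_bool (v \<in> ?O)) \<le> (\<Sum>v\<in>V. deg H v + of_bool (v \<in> ?L))"
    using pv by (rule sum_mono)
  moreover have "(\<Sum>v\<in>V. 2 * of_bool (v \<in> W) + of_bool (v \<in> ?O)) = 2 * card W + card ?O"
  proof -
    have "(\<Sum>v\<in>V. (of_bool (v \<in> W)::nat)) = card W"
    proof -
      have "V \<inter> {v. v \<in> W} = W" unfolding W_def by blast
      then show ?thesis using fin by simp
    qed
    moreover have "(\<Sum>v\<in>V. (of_bool (v \<in> ?O)::nat)) = card ?O"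
      using sum_bool_card[OF fin, of ?O] by blast
    ultimately show ?thesis by (simp add: sum.distrib sum_distrib_left[symmetric])
  qed
  moreover have "(\<Sum>v\<in>V. deg H v + of_bool (v \<in> ?L)) = 2 * card H + card ?L"
  proof -
    have "(\<Sum>v\<in>V. (of_bool (v \<in> ?L)::nat)) = card ?L"
      using sum_bool_card[OF fin, of ?L] by blast
    then show ?thesis using hs by (simp add: sum.distrib)
  qed
  ultimately show ?thesis using HW by linarith
qed

definition goodG :: "nat set \<Rightarrow> nat set set \<Rightarrow> bool" where
  "goodG V E \<longleftrightarrow> simple_graph V E \<and> connected_graph V E \<and> cp E \<and>
     (\<forall>g\<in>E. on_cycle E g \<or> (\<exists>x\<in>g. deg E x = 1))"

lemma edge_sub:
  assumes "simple_graph V E" "g \<in> E"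
  shows "g \<subseteq> V"
  using edge_form[OF assms] by blast

lemma good_core:
  assumes fin: "finite V" and G: "goodG V E"
  shows "core_cactus V E"
proof -
  have sg: "simple_graph V E" and con: "connected_graph V E" and cpE: "cp E"
    and ep: "\<forall>g\<in>E. on_cycle E g \<or> (\<exists>x\<in>g. deg E x = 1)"
    using G unfolding goodG_def by auto
  have fE: "finite E" using simple_finite fin sg by blast
  have cac: "cactus V E" unfolding cactus_def using sg con cpE unfolding cp_def by blast
  have nb: False if br: "is_bridge V E {u, v}"
    and s1: "has_cycle_in (E - {{u, v}}) (component (E - {{u, v}}) u)"
    and s2: "has_cycle_in (E - {{u, v}}) (component (E - {{u, v}}) v)" for u v
  proof -
    let ?g = "{u, v}"
    have gE: "?g \<in> E" and nc: "\<not> connected_graph V (E - {?g})" using br unfolding is_bridge_def by auto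
    have "on_cycle E ?g \<or> (\<exists>x\<in>?g. deg E x = 1)" using ep gE by blast
    then show False
    proof
      assume "on_cycle E ?g"
      then obtain C where C: "is_cycle E C" "?g \<in> C" unfolding on_cycle_def by blast
      then obtain vs where vs: "distinct vs" "3 \<le> length vs" "C = cycle_edges vs" "C \<subseteq> E"
        unfolding is_cycle_def by blast
      obtain i where i: "i < length vs" "?g = ce vs i" using C(2) vs(3) unfolding cycle_edges_ce by blast
      have sub: "cycle_edges vs - {ce vs i} \<subseteq> E - {?g}" using vs(3,4) i(2) by blast
      have ends: "ce vs i \<subseteq> set vs" using ce_in_set[OF i(1)] .
      have step: "(adj (E - {?g}))\<^sup>*\<^sup>* a b" if "(adj E)\<^sup>*\<^sup>* a b" for a b
        using that
      proof (induction rule: rtranclp_induct)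
        case base then show ?case by simp
      next
        case (step y z)
        have "(adj (E - {?g}))\<^sup>*\<^sup>* y z"
        proof (cases "{y, z} = ?g")
          case True
          then have "y \<in> set vs" "z \<in> set vs" using ends i(2) by auto
          then have "(adj (cycle_edges vs - {ce vs i}))\<^sup>*\<^sup>* y z"
            using cycle_reach_avoid[OF vs(1,2) i(1)] by blast
          then show ?thesis using reach_mono[OF sub] by blast
        next
          case False
          then have "{y, z} \<in> E - {?g}" using step(2) by (simp add: adj_def)
          then show ?thesis by (rule reach_edge)
        qed
        then show ?case by (rule rtranclp_trans[OF step(3)])
      qed
      have "connected_graph V (E - {?g})"
        using con step unfolding connected_graph_def by blast
      then show False using nc by simp
    next
      assume "\<exists>x\<in>?g. deg E x = 1"
      then obtain x where x: "x \<in> ?g" "deg E x = 1" by blast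
      obtain h where h: "h \<in> E" "x \<in> h" "\<And>k. k \<in> E \<Longrightarrow> x \<in> k \<Longrightarrow> k = h"
        using leaf_edge[OF x(2)] by blast
      have hg: "h = ?g" using h(3)[OF gE x(1)] by simp
      have comp: "component (E - {?g}) x = {x}"
      proof -
        have "y = x" if "(adj (E - {?g}))\<^sup>*\<^sup>* x y" for y
          using that
        proof (induction rule: rtranclp_induct)
          case base then show ?case by simp
        next
          case (step b c)
          then have "{x, c} \<in> E - {?g}" by (simp add: adj_def)
          then show ?case using h(3)[of "{x, c}"] hg by blast
        qed
        then show ?thesis unfolding component_def by auto
      qed
      have "has_cycle_in (E - {?g}) {x}"
        using s1 s2 x(1) comp by auto
      then obtain C where C: "is_cycle (E - {?g}) C" "\<Union>C \<subseteq> {x}" unfolding has_cycle_in_def by blast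
      then obtain vs where vs: "distinct vs" "3 \<le> length vs" "C = cycle_edges vs"
        unfolding is_cycle_def by blast
      have "set vs \<subseteq> {x}" using C(2) vs(3) cycle_vertices[OF vs(2)] by simp
      moreover have "vs ! 0 \<noteq> vs ! 1"
      proof
        assume "vs ! 0 = vs ! 1"
        moreover have "0 < length vs" "1 < length vs" using vs(2) by linarith+
        ultimately have "(0::nat) = 1" using nth_eq_iff_index_eq[OF vs(1)] by blast
        then show False by simp
      qed
      moreover have "vs ! 0 \<in> set vs" "vs ! 1 \<in> set vs" using vs(2) by (auto intro!: nth_mem)
      ultimately show False by blast
    qed
  qed
  show ?thesis unfolding core_cactus_def using cac nb by blast
qed

lemma cycle_simple:
  assumes "distinct vs" "3 \<le> length vs"
  shows "simple_graph (set vs) (cycle_edges vs)"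
  unfolding simple_graph_def
proof
  fix g assume "g \<in> cycle_edges vs"
  then obtain i where i: "i < length vs" "g = ce vs i" unfolding cycle_edges_ce by blast
  let ?L = "length vs"
  have L0: "0 < ?L" using assms by linarith
  have sL: "Suc i mod ?L < ?L" using L0 by simp
  have "i \<noteq> Suc i mod ?L"
  proof (cases "Suc i < ?L")
    case True then show ?thesis by simp
  next
    case False then have "Suc i = ?L" using i(1) by simp
    then show ?thesis using assms(2) by simp
  qed
  then have "vs ! i \<noteq> vs ! (Suc i mod ?L)" using nth_eq_iff_index_eq[OF assms(1) i(1) sL] by simp
  moreover have "vs ! i \<in> set vs" "vs ! (Suc i mod ?L) \<in> set vs" using i(1) sL by simp_all
  ultimately show "\<exists>u v. g = {u, v} \<and> u \<noteq> v \<and> u \<in> set vs \<and> v \<in> set vs"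
    using i(2) unfolding ce_def by blast
qed

lemma single_cycle_good:
  assumes "distinct vs" "3 \<le> length vs"
  shows "goodG (set vs) (cycle_edges vs) \<and> (\<forall>v\<in>set vs. deg (cycle_edges vs) v = 2)"
proof -
  let ?C = "cycle_edges vs"
  have sg: "simple_graph (set vs) ?C" using cycle_simple[OF assms] .
  have con: "connected_graph (set vs) ?C"
    unfolding connected_graph_def using cycle_reach[OF assms] assms(2) by auto
  have only: "C' = ?C" if ic: "is_cycle ?C C'" for C'
  proof -
    obtain ws where ws: "distinct ws" "3 \<le> length ws" "C' = cycle_edges ws" "C' \<subseteq> ?C"
      using ic unfolding is_cycle_def by blast
    then show ?thesis using only_cycle[OF ws(1,2) assms] by simp
  qed
  have cpC: "cp ?C" unfolding cp_def using only by blast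
  have self: "is_cycle ?C ?C" unfolding is_cycle_def using assms by blast
  have "\<forall>g\<in>?C. on_cycle ?C g" unfolding on_cycle_def using self by blast
  then have "goodG (set vs) ?C" unfolding goodG_def using sg con cpC by blast
  moreover have "\<forall>v\<in>set vs. deg ?C v = 2" unfolding deg_def using cycle_deg[OF assms] by blast
  ultimately show ?thesis by blast
qed

lemma add_leaf:
  assumes fin: "finite V" and G: "goodG V E" and w: "w \<in> V" and x: "x \<notin> V" and dw: "2 \<le> deg E w"
  shows "goodG (insert x V) (insert {w, x} E)"
    and "deg (insert {w, x} E) x = 1"
    and "deg (insert {w, x} E) w = Suc (deg E w)"
    and "\<And>y. y \<in> V \<Longrightarrow> y \<noteq> w \<Longrightarrow> deg (insert {w, x} E) y = deg E y"
proof -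
  let ?E = "insert {w, x} E"
  have sg: "simple_graph V E" and con: "connected_graph V E" and cpE: "cp E"
    and ep: "\<forall>g\<in>E. on_cycle E g \<or> (\<exists>x\<in>g. deg E x = 1)"
    using G unfolding goodG_def by auto
  have fE: "finite E" using simple_finite fin sg by blast
  have noxE: "x \<notin> g" if "g \<in> E" for g using edge_sub[OF sg that] x by blast
  have wx: "w \<noteq> x" using w x by blast
  have wxE: "{w, x} \<notin> E" using noxE by blast
  show dx: "deg ?E x = 1"
  proof -
    have "{g \<in> ?E. x \<in> g} = {{w, x}}" using noxE by auto
    then show ?thesis unfolding deg_def by simp
  qed
  show "deg ?E w = Suc (deg E w)"
  proof -
    have "{g \<in> ?E. w \<in> g} = insert {w, x} {g \<in> E. w \<in> g}" by auto
    then show ?thesis unfolding deg_def using fE wxE by simp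
  qed
  show dy: "deg ?E y = deg E y" if "y \<in> V" "y \<noteq> w" for y
  proof -
    have "y \<noteq> x" using that x by blast
    then have "{g \<in> ?E. y \<in> g} = {g \<in> E. y \<in> g}" using that by auto
    then show ?thesis unfolding deg_def by simp
  qed
  have sg': "simple_graph (insert x V) ?E"
    using sg wx w unfolding simple_graph_def by blast
  have con': "connected_graph (insert x V) ?E"
  proof -
    have r: "(adj ?E)\<^sup>*\<^sup>* a b" if "a \<in> V" "b \<in> V" for a b
      using con that reach_mono[of E ?E] unfolding connected_graph_def by blast
    have rx: "(adj ?E)\<^sup>*\<^sup>* w x" by (rule reach_edge) simp
    have "(adj ?E)\<^sup>*\<^sup>* a b" if "a \<in> insert x V" "b \<in> insert x V" for a b
    proof -
      have ra: "(adj ?E)\<^sup>*\<^sup>* w a" using that(1) r[OF w] rx by blast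
      have rb: "(adj ?E)\<^sup>*\<^sup>* w b" using that(2) r[OF w] rx by blast
      show ?thesis using reach_sym[OF ra] rb by (rule rtranclp_trans)
    qed
    then show ?thesis unfolding connected_graph_def by blast
  qed
  have cyc: "is_cycle E C" if "is_cycle ?E C" for C
  proof -
    have fE': "finite ?E" using fE by simp
    have "x \<notin> \<Union>C"
    proof
      assume "x \<in> \<Union>C"
      then have "2 \<le> deg ?E x" using cycle_vertex_deg[OF fE' that] by blast
      then show False using dx by simp
    qed
    then have "C \<subseteq> E" using is_cycle_sub[OF that] by blast
    then show ?thesis using that unfolding is_cycle_def by blast
  qed
  have cp': "cp ?E"
    unfolding cp_def
  proof (intro ballI allI impI)
    fix g C1 C2 assume "g \<in> ?E" and h: "is_cycle ?E C1 \<and> is_cycle ?E C2 \<and> g \<in> C1 \<and> g \<in> C2"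
    then have "is_cycle E C1" "is_cycle E C2" using cyc by auto
    then show "C1 = C2" using cp_unique[OF cpE] h by blast
  qed
  have ep': "\<forall>g\<in>?E. on_cycle ?E g \<or> (\<exists>z\<in>g. deg ?E z = 1)"
  proof
    fix g assume g: "g \<in> ?E"
    show "on_cycle ?E g \<or> (\<exists>z\<in>g. deg ?E z = 1)"
    proof (cases "g = {w, x}")
      case True then show ?thesis using dx by blast
    next
      case False
      then have gE: "g \<in> E" using g by blast
      then have "on_cycle E g \<or> (\<exists>z\<in>g. deg E z = 1)" using ep by blast
      then show ?thesis
      proof
        assume "on_cycle E g"
        then show ?thesis using on_cycle_mono[of E g ?E] by blast
      next
        assume "\<exists>z\<in>g. deg E z = 1"
        then obtain z where z: "z \<in> g" "deg E z = 1" by blast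
        have "z \<in> V" using edge_sub[OF sg gE] z(1) by blast
        moreover have "z \<noteq> w" using z(2) dw by auto
        ultimately have "deg ?E z = 1" using dy z(2) by simp
        then show ?thesis using z(1) by blast
      qed
    qed
  qed
  show "goodG (insert x V) ?E" unfolding goodG_def using sg' con' cp' ep' by blast
qed


lemma tri_edges:
  "cycle_edges [w, x, y] = {{w, x}, {x, y}, {y, w}}"
proof -
  have e: "{..<length [w, x, y]} = {0, 1, 2}" by (auto simp: numeral_3_eq_3 less_Suc_eq)
  have "cycle_edges [w, x, y] = ce [w, x, y] ` {0, 1, 2}"
    unfolding cycle_edges_ce e ..
  then show ?thesis by (simp add: ce_def insert_commute)
qed

lemma add_triangle:
  assumes fin: "finite V" and G: "goodG V E" and w: "w \<in> V" and x: "x \<notin> V" and y: "y \<notin> V"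
    and xy: "x \<noteq> y" and dw: "2 \<le> deg E w"
  shows "goodG (insert x (insert y V)) (E \<union> {{w, x}, {x, y}, {y, w}})"
    and "deg (E \<union> {{w, x}, {x, y}, {y, w}}) x = 2"
    and "deg (E \<union> {{w, x}, {x, y}, {y, w}}) y = 2"
    and "deg (E \<union> {{w, x}, {x, y}, {y, w}}) w = deg E w + 2"
    and "\<And>z. z \<in> V \<Longrightarrow> z \<noteq> w \<Longrightarrow> deg (E \<union> {{w, x}, {x, y}, {y, w}}) z = deg E z"
proof -
  let ?T = "{{w, x}, {x, y}, {y, w}}"
  let ?E = "E \<union> ?T"
  have sg: "simple_graph V E" and con: "connected_graph V E" and cpE: "cp E"
    and ep: "\<forall>g\<in>E. on_cycle E g \<or> (\<exists>x\<in>g. deg E x = 1)"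
    using G unfolding goodG_def by auto
  have fE: "finite E" using simple_finite fin sg by blast
  have fE': "finite ?E" using fE by simp
  have noxE: "x \<notin> g" "y \<notin> g" if "g \<in> E" for g using edge_sub[OF sg that] x y by blast+
  have wx: "w \<noteq> x" and wy: "w \<noteq> y" using w x y by blast+
  have Tnot: "g \<notin> E" if "g \<in> ?T" for g using that noxE by blast
  have dst: "distinct [w, x, y]" using wx wy xy by simp
  have len: "3 \<le> length [w, x, y]" by simp
  have Tc: "cycle_edges [w, x, y] = ?T" by (rule tri_edges)
  show dx: "deg ?E x = 2"
  proof -
    have "{g \<in> ?E. x \<in> g} = {{w, x}, {x, y}}" using noxE wx xy by blast
    moreover have "{w, x} \<noteq> {x, y}" using wy wx xy by (simp add: doubleton_eq_iff)
    ultimately show ?thesis unfolding deg_def by simp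
  qed
  show dy: "deg ?E y = 2"
  proof -
    have "{g \<in> ?E. y \<in> g} = {{x, y}, {y, w}}" using noxE wy xy by blast
    moreover have "{x, y} \<noteq> {y, w}" using wy wx xy by (simp add: doubleton_eq_iff)
    ultimately show ?thesis unfolding deg_def by simp
  qed
  show "deg ?E w = deg E w + 2"
  proof -
    have e1: "{g \<in> ?E. w \<in> g} = {g \<in> E. w \<in> g} \<union> {{w, x}, {y, w}}" using wx wy by blast
    have e2: "{g \<in> E. w \<in> g} \<inter> {{w, x}, {y, w}} = {}" using noxE by blast
    have e3: "{w, x} \<noteq> {y, w}" using wy wx xy by (simp add: doubleton_eq_iff)
    have "card ({g \<in> E. w \<in> g} \<union> {{w, x}, {y, w}}) = card {g \<in> E. w \<in> g} + card {{w, x}, {y, w}}"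
      using fE e2 by (intro card_Un_disjoint) auto
    also have "card {{w, x}, {y, w}} = 2" using e3 by simp
    finally show ?thesis unfolding deg_def e1 by simp
  qed
  show dz: "deg ?E z = deg E z" if "z \<in> V" "z \<noteq> w" for z
  proof -
    have "z \<noteq> x" "z \<noteq> y" using that x y by blast+
    then have "{g \<in> ?E. z \<in> g} = {g \<in> E. z \<in> g}" using that by auto
    then show ?thesis unfolding deg_def by simp
  qed
  have sg': "simple_graph (insert x (insert y V)) ?E"
    unfolding simple_graph_def
  proof
    fix g assume g: "g \<in> ?E"
    let ?V = "insert x (insert y V)"
    show "\<exists>u v. g = {u, v} \<and> u \<noteq> v \<and> u \<in> ?V \<and> v \<in> ?V"
    proof (cases "g \<in> E")
      case True
      then obtain u v where "g = {u, v}" "u \<noteq> v" "u \<in> V" "v \<in> V" using edge_form[OF sg] by blast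
      then show ?thesis by blast
    next
      case False
      then have "g = {w, x} \<or> g = {x, y} \<or> g = {y, w}" using g by blast
      then show ?thesis using wx wy xy w by blast
    qed
  qed
  have con': "connected_graph (insert x (insert y V)) ?E"
  proof -
    have r: "(adj ?E)\<^sup>*\<^sup>* a b" if "a \<in> V" "b \<in> V" for a b
      using con that reach_mono[of E ?E] unfolding connected_graph_def by blast
    have rx: "(adj ?E)\<^sup>*\<^sup>* w x" by (rule reach_edge) simp
    have ry: "(adj ?E)\<^sup>*\<^sup>* w y" by (rule reach_edge) (simp add: insert_commute)
    have "(adj ?E)\<^sup>*\<^sup>* a b" if "a \<in> insert x (insert y V)" "b \<in> insert x (insert y V)" for a b
    proof -
      have ra: "(adj ?E)\<^sup>*\<^sup>* w a" using that(1) r[OF w] rx ry by blast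
      have rb: "(adj ?E)\<^sup>*\<^sup>* w b" using that(2) r[OF w] rx ry by blast
      show ?thesis using reach_sym[OF ra] rb by (rule rtranclp_trans)
    qed
    then show ?thesis unfolding connected_graph_def by blast
  qed
  have Tcyc: "is_cycle ?E ?T" unfolding is_cycle_def using dst len Tc by (metis Un_upper2)
  have cls: "C = ?T \<or> is_cycle E C" if ic: "is_cycle ?E C" for C
  proof (cases "C \<inter> ?T = {}")
    case True
    then have "C \<subseteq> E" using is_cycle_sub[OF ic] by blast
    then show ?thesis using ic unfolding is_cycle_def by blast
  next
    case False
    obtain vs where vs: "distinct vs" "3 \<le> length vs" "C = cycle_edges vs" "C \<subseteq> ?E"
      using ic unfolding is_cycle_def by blast
    have loc: "{g \<in> ?E. z \<in> g} \<subseteq> C" if zz: "z = x \<or> z = y" "z \<in> \<Union>C" for z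
    proof -
      have "z \<in> set vs" using zz(2) vs(3) cycle_vertices[OF vs(2)] by simp
      then have c2: "card {g \<in> C. z \<in> g} = 2" using cycle_deg[OF vs(1,2)] vs(3) by simp
      have "card {g \<in> ?E. z \<in> g} = 2" using zz(1) dx dy unfolding deg_def by (elim disjE) simp_all
      moreover have "{g \<in> C. z \<in> g} \<subseteq> {g \<in> ?E. z \<in> g}" using vs(4) by blast
      moreover have "finite {g \<in> ?E. z \<in> g}" using fE' by simp
      ultimately have "{g \<in> C. z \<in> g} = {g \<in> ?E. z \<in> g}" using c2 by (simp add: card_subset_eq)
      then show ?thesis by blast
    qed
    obtain g where g: "g \<in> C" "g \<in> ?T" using False by blast
    have TC: "?T \<subseteq> C"
    proof (cases "x \<in> g")
      case True
      then have "x \<in> \<Union>C" using g(1) by blast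
      then have lx: "{g \<in> ?E. x \<in> g} \<subseteq> C" using loc[of x] by simp
      have a: "{w, x} \<in> C" "{x, y} \<in> C" using subsetD[OF lx] by simp_all
      then have "y \<in> \<Union>C" by blast
      then have ly: "{g \<in> ?E. y \<in> g} \<subseteq> C" using loc[of y] by simp
      have "{y, w} \<in> C" using subsetD[OF ly] by simp
      then show ?thesis using a by blast
    next
      case False
      then have "y \<in> g" using g(2) by blast
      then have "y \<in> \<Union>C" using g(1) by blast
      then have ly: "{g \<in> ?E. y \<in> g} \<subseteq> C" using loc[of y] by simp
      have a: "{x, y} \<in> C" "{y, w} \<in> C" using subsetD[OF ly] by simp_all
      then have "x \<in> \<Union>C" by blast
      then have lx: "{g \<in> ?E. x \<in> g} \<subseteq> C" using loc[of x] by simp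
      have "{w, x} \<in> C" using subsetD[OF lx] by simp
      then show ?thesis using a by blast
    qed
    have "cycle_edges [w, x, y] = cycle_edges vs"
      using only_cycle[OF dst len vs(1,2)] TC Tc vs(3) by simp
    then show ?thesis using Tc vs(3) by simp
  qed
  have cp': "cp ?E"
    unfolding cp_def
  proof (intro ballI allI impI)
    fix g C1 C2 assume "g \<in> ?E" and h: "is_cycle ?E C1 \<and> is_cycle ?E C2 \<and> g \<in> C1 \<and> g \<in> C2"
    have c1: "C1 = ?T \<or> is_cycle E C1" using cls h by blast
    have c2: "C2 = ?T \<or> is_cycle E C2" using cls h by blast
    have mix: False if mh: "C = ?T" "is_cycle E C'" "g \<in> C" "g \<in> C'" for C C'
    proof -
      have "g \<in> E" using is_cycle_sub[OF mh(2)] mh(4) by blast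
      moreover have "g \<in> ?T" using mh(1,3) by simp
      ultimately show False using Tnot by blast
    qed
    show "C1 = C2"
    proof (cases "C1 = ?T")
      case True
      show ?thesis
      proof (cases "C2 = ?T")
        case True then show ?thesis using \<open>C1 = ?T\<close> by simp
      next
        case False then have "is_cycle E C2" using c2 by simp
        then show ?thesis using mix[OF \<open>C1 = ?T\<close>] h by blast
      qed
    next
      case False
      then have e1: "is_cycle E C1" using c1 by simp
      show ?thesis
      proof (cases "C2 = ?T")
        case True then show ?thesis using mix[OF True e1] h by blast
      next
        case False then have "is_cycle E C2" using c2 by simp
        then show ?thesis using cp_unique[OF cpE e1] h by blast
      qed
    qed
  qed
  have ep': "\<forall>g\<in>?E. on_cycle ?E g \<or> (\<exists>z\<in>g. deg ?E z = 1)"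
  proof
    fix g assume g: "g \<in> ?E"
    show "on_cycle ?E g \<or> (\<exists>z\<in>g. deg ?E z = 1)"
    proof (cases "g \<in> ?T")
      case True then show ?thesis using Tcyc unfolding on_cycle_def by blast
    next
      case False
      then have gE: "g \<in> E" using g by blast
      then have "on_cycle E g \<or> (\<exists>z\<in>g. deg E z = 1)" using ep by blast
      then show ?thesis
      proof
        assume "on_cycle E g"
        then show ?thesis using on_cycle_mono[of E g ?E] by blast
      next
        assume "\<exists>z\<in>g. deg E z = 1"
        then obtain z where z: "z \<in> g" "deg E z = 1" by blast
        have "z \<in> V" using edge_sub[OF sg gE] z(1) by blast
        moreover have "z \<noteq> w" using z(2) dw by auto
        ultimately have "deg ?E z = 1" using dz z(2) by simp
        then show ?thesis using z(1) by blast
      qed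
    qed
  qed
  show "goodG (insert x (insert y V)) ?E" unfolding goodG_def using sg' con' cp' ep' by blast
qed

lemma sum_upd:
  fixes d :: "nat \<Rightarrow> nat"
  assumes "finite A" "w \<in> A"
  shows "(\<Sum>v\<in>A. (d(w := c)) v) + d w = (\<Sum>v\<in>A. d v) + c"
proof -
  have "(\<Sum>v\<in>A. (d(w := c)) v) = (d(w := c)) w + (\<Sum>v\<in>A - {w}. (d(w := c)) v)"
    by (rule sum.remove[OF assms])
  also have "(\<Sum>v\<in>A - {w}. (d(w := c)) v) = (\<Sum>v\<in>A - {w}. d v)" by (rule sum.cong) auto
  finally have a: "(\<Sum>v\<in>A. (d(w := c)) v) = c + (\<Sum>v\<in>A - {w}. d v)" by simp
  have b: "(\<Sum>v\<in>A. d v) = d w + (\<Sum>v\<in>A - {w}. d v)" by (rule sum.remove[OF assms])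
  show ?thesis using a b by (simp add: ac_simps)
qed

lemma odd_split:
  "{v \<in> V. odd (d v)} = {v \<in> V. odd (d v) \<and> 1 < d v} \<union> {v \<in> V. d v = (1::nat)}"
proof (rule set_eqI, rule iffI)
  fix v assume "v \<in> {v \<in> V. odd (d v)}"
  moreover have "odd (d v) \<Longrightarrow> 0 < d v" by (rule odd_pos)
  ultimately show "v \<in> {v \<in> V. odd (d v) \<and> 1 < d v} \<union> {v \<in> V. d v = (1::nat)}" by auto
qed auto

lemma construct:
  fixes V :: "nat set" and d :: "nat \<Rightarrow> nat"
  assumes "finite V" "\<forall>v\<in>V. 1 \<le> d v" "even (\<Sum>v\<in>V. d v)" "2 * card V \<le> (\<Sum>v\<in>V. d v)"
    "card {v \<in> V. odd (d v) \<and> 1 < d v} \<le> card {v \<in> V. d v = 1}"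
    "(\<Sum>v\<in>V. d v) + card {v \<in> V. d v = 1} + 3 \<le> 3 * card V"
  shows "\<exists>E. goodG V E \<and> (\<forall>v\<in>V. deg E v = d v)"
  using assms
proof (induction "card V" arbitrary: V d rule: less_induct)
  case less
  note fin = less.prems(1) and pos = less.prems(2) and ev = less.prems(3) and lo = less.prems(4)
    and OL = less.prems(5) and up = less.prems(6)
  let ?S = "\<Sum>v\<in>V. d v"
  let ?L = "{v \<in> V. d v = 1}"
  let ?O = "{v \<in> V. odd (d v) \<and> 1 < d v}"
  have fO: "finite ?O" and fL: "finite ?L" using fin by simp_all
  have par: "even (card ?O + card ?L)"
  proof -
    have "even (card {v \<in> V. odd (d v)})" using ev even_sum_iff[OF fin] by blast
    moreover have "card {v \<in> V. odd (d v)} = card ?O + card ?L"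
      unfolding odd_split using fO fL by (subst card_Un_disjoint) auto
    ultimately show ?thesis by simp
  qed
  show ?case
  proof (cases "\<exists>x\<in>V. d x = 1")
    case True
    then obtain x where x: "x \<in> V" "d x = 1" by blast
    have xL: "x \<in> ?L" using x by simp
    have cL: "1 \<le> card ?L" using xL fL by (metis One_nat_def Suc_leI card_gt_0_iff empty_iff)
    obtain w where w: "w \<in> V" "3 \<le> d w" "odd (d w) \<or> card ?O = 0"
    proof (cases "card ?O = 0")
      case False
      then have "?O \<noteq> {}" using fO by (metis card.empty)
      then obtain w where "w \<in> ?O" by blast
      then have "w \<in> V" "odd (d w)" "1 < d w" by auto
      moreover have "3 \<le> d w" using \<open>odd (d w)\<close> \<open>1 < d w\<close>
        by presburger
      ultimately show ?thesis using that by blast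
    next
      case True
      have "\<exists>w\<in>V. 3 \<le> d w"
      proof (rule ccontr)
        assume "\<not> (\<exists>w\<in>V. 3 \<le> d w)"
        then have le2: "\<forall>v\<in>V. d v \<le> 2" by auto
        have "?S = d x + (\<Sum>v\<in>V - {x}. d v)" by (rule sum.remove[OF fin x(1)])
        also have "(\<Sum>v\<in>V - {x}. d v) \<le> (\<Sum>v\<in>V - {x}. 2)" using le2 by (intro sum_mono) auto
        also have "... = 2 * (card V - 1)" using x(1) fin by simp
        finally have "?S \<le> 1 + 2 * (card V - 1)" using x(2) by simp
        moreover have "1 \<le> card V" using x(1) fin by (metis One_nat_def Suc_leI card_gt_0_iff empty_iff)
        ultimately show False using lo by linarith
      qed
      then show ?thesis using that True by blast
    qed
    have wx: "w \<noteq> x" using w x by auto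
    define V' where "V' = V - {x}"
    define d' where "d' = d(w := d w - 1)"
    have wV': "w \<in> V'" using w wx V'_def by simp
    have xV': "x \<notin> V'" using V'_def by simp
    have fV': "finite V'" using fin V'_def by simp
    have cV': "card V' = card V - 1" using V'_def fin x(1) by simp
    have VV': "V = insert x V'" using V'_def x(1) by blast
    have pos': "\<forall>v\<in>V'. 1 \<le> d' v" using pos w(2) V'_def d'_def by auto
    have sumV: "?S = 1 + (\<Sum>v\<in>V'. d v)" using sum.remove[OF fin x(1), of d] x(2) V'_def by simp
    have sumV': "(\<Sum>v\<in>V'. d' v) + d w = (\<Sum>v\<in>V'. d v) + (d w - 1)"
      unfolding d'_def by (rule sum_upd[OF fV' wV'])
    have S': "(\<Sum>v\<in>V'. d' v) + 2 = ?S" using sumV sumV' w(2) by linarith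
    have L': "{v \<in> V'. d' v = 1} = ?L - {x}" using w(2) V'_def d'_def by auto
    have cL': "card {v \<in> V'. d' v = 1} = card ?L - 1" unfolding L' using xL fL by simp
    have OL': "card {v \<in> V'. odd (d' v) \<and> 1 < d' v} \<le> card {v \<in> V'. d' v = 1}"
    proof (cases "odd (d w)")
      case True
      have "{v \<in> V'. odd (d' v) \<and> 1 < d' v} = ?O - {w}"
        using True w(2) x(2) V'_def d'_def by auto
      moreover have "w \<in> ?O" using True w by auto
      ultimately have "card {v \<in> V'. odd (d' v) \<and> 1 < d' v} = card ?O - 1" using fO by simp
      then show ?thesis using cL' OL by linarith
    next
      case False
      then have O0: "card ?O = 0" using w(3) by simp
      then have Oe: "?O = {}" using fO by simp
      have "{v \<in> V'. odd (d' v) \<and> 1 < d' v} \<subseteq> {w}"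
      proof
        fix v assume v: "v \<in> {v \<in> V'. odd (d' v) \<and> 1 < d' v}"
        show "v \<in> {w}"
        proof (rule ccontr)
          assume "v \<notin> {w}"
          then have "v \<in> ?O" using v V'_def d'_def by auto
          then show False using Oe by blast
        qed
      qed
      then have "card {v \<in> V'. odd (d' v) \<and> 1 < d' v} \<le> 1"
        using card_mono[of "{w}"] by simp
      moreover have "even (card ?L)" using par O0 by simp
      then have "2 \<le> card ?L" using cL by (cases "card ?L = 1") auto
      ultimately show ?thesis using cL' by linarith
    qed
    have ev': "even (\<Sum>v\<in>V'. d' v)" using S' ev by (metis even_add even_numeral)
    have lo': "2 * card V' \<le> (\<Sum>v\<in>V'. d' v)" using S' lo cV' by linarith
    have up': "(\<Sum>v\<in>V'. d' v) + card {v \<in> V'. d' v = 1} + 3 \<le> 3 * card V'"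
      using S' up cV' cL' cL by linarith
    have lt: "card V' < card V" using cV' x(1) fin by (metis card_Diff1_less V'_def)
    obtain E' where E': "goodG V' E'" "\<forall>v\<in>V'. deg E' v = d' v"
      using less.hyps[OF lt fV' pos' ev' lo' OL' up'] by blast
    have dw': "2 \<le> deg E' w" using E'(2) wV' w(2) d'_def by simp
    note AL = add_leaf[OF fV' E'(1) wV' xV' dw']
    have "\<forall>v\<in>V. deg (insert {w, x} E') v = d v"
    proof
      fix v assume "v \<in> V"
      then consider "v = x" | "v = w" | "v \<in> V'" "v \<noteq> w" using VV' by blast
      then show "deg (insert {w, x} E') v = d v"
      proof cases
        case 1 then show ?thesis using AL(2) x(2) by simp
      next
        case 2 then show ?thesis using AL(3) E'(2) wV' w(2) d'_def by simp
      next
        case 3 then show ?thesis using AL(4)[OF 3] E'(2) d'_def by simp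
      qed
    qed
    then show ?thesis using AL(1) VV' by auto
  next
    case False
    then have no1: "\<forall>v\<in>V. d v \<noteq> 1" by blast
    then have L0: "?L = {}" by blast
    have "card ?O = 0" using OL unfolding L0 by simp
    then have Oe: "?O = {}" using fO by simp
    have evd: "even (d v)" "2 \<le> d v" if "v \<in> V" for v
    proof -
      show "even (d v)" using Oe no1 pos that by fastforce
      show "2 \<le> d v" using no1 pos that by fastforce
    qed
    show ?thesis
    proof (cases "\<forall>v\<in>V. d v = 2")
      case True
      have "?S = 2 * card V" using True by simp
      then have n3: "3 \<le> card V" using up by simp
      define vs where "vs = sorted_list_of_set V"
      have vs: "distinct vs" "set vs = V" "length vs = card V" using fin vs_def by auto
      have "3 \<le> length vs" using vs(3) n3 by simp
      note SC = single_cycle_good[OF vs(1) this]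
      then show ?thesis using vs(2) True by auto
    next
      case False
      then obtain w where w: "w \<in> V" "d w \<noteq> 2" by blast
      have w4: "4 \<le> d w" using evd[OF w(1)] w(2)
        by presburger
      define D where "D = {v \<in> V. d v \<noteq> 2}"
      have fD: "finite D" using fin D_def by simp
      have DV: "D \<subseteq> V" using D_def by blast
      have wD: "w \<in> D" using w D_def by simp
      have "(\<Sum>v\<in>V. 2 + 2 * (of_bool (v \<in> D)::nat)) \<le> ?S"
      proof (rule sum_mono)
        fix v assume v: "v \<in> V"
        show "2 + 2 * (of_bool (v \<in> D)::nat) \<le> d v"
        proof (cases "v \<in> D")
          case True
          then have "d v \<noteq> 2" using D_def by simp
          then have "4 \<le> d v" using evd[OF v]
            by presburger
          then show ?thesis using True by simp
        next
          case False then show ?thesis using evd[OF v] by simp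
        qed
      qed
      moreover have "(\<Sum>v\<in>V. 2 + 2 * (of_bool (v \<in> D)::nat)) = 2 * card V + 2 * card D"
      proof -
        have "(\<Sum>v\<in>V. 2 + 2 * (of_bool (v \<in> D)::nat)) = (\<Sum>v\<in>V. 2) + (\<Sum>v\<in>V. 2 * (of_bool (v \<in> D)::nat))"
          by (rule sum.distrib)
        also have "... = 2 * card V + 2 * (\<Sum>v\<in>V. (of_bool (v \<in> D)::nat))"
          by (simp only: sum_distrib_left[symmetric]) simp
        also have "... = 2 * card V + 2 * card D" using sum_bool_card[OF fin DV] by simp
        finally show ?thesis .
      qed
      ultimately have SD: "2 * card V + 2 * card D \<le> ?S" by simp
      have cD1: "1 \<le> card D" using wD fD by (metis One_nat_def Suc_leI card_gt_0_iff empty_iff)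
      have "card (V - D) = card V - card D" using fin DV by (simp add: card_Diff_subset finite_subset)
      then have cVD: "2 \<le> card (V - D)" using SD up L0 by simp
      obtain x where x: "x \<in> V - D"
        using cVD by (metis card.empty ex_in_conv not_numeral_le_zero)
      have "card (V - D - {x}) \<ge> 1" using cVD x fin by simp
      then obtain y where y: "y \<in> V - D - {x}" by (metis card.empty ex_in_conv not_one_le_zero)
      have xy: "x \<noteq> y" using y by simp
      have xV: "x \<in> V" "d x = 2" using x D_def by auto
      have yV: "y \<in> V" "d y = 2" using y D_def by auto
      have wx: "w \<noteq> x" "w \<noteq> y" using w xV yV by auto
      define V' where "V' = V - {x, y}"
      define d' where "d' = d(w := d w - 2)"
      have wV': "w \<in> V'" using w wx V'_def by simp
      have xV': "x \<notin> V'" "y \<notin> V'" using V'_def by simp_all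
      have fV': "finite V'" using fin V'_def by simp
      have cV': "card V' = card V - 2" using V'_def fin xV yV xy by (simp add: card_Diff_subset)
      have VV': "V = insert x (insert y V')" using V'_def xV yV by blast
      have pos': "\<forall>v\<in>V'. 1 \<le> d' v" using pos w4 V'_def d'_def by auto
      have sumV: "?S = 4 + (\<Sum>v\<in>V'. d v)"
      proof -
        have "?S = (\<Sum>v\<in>V - {x, y}. d v) + (\<Sum>v\<in>{x, y}. d v)"
          using fin xV yV by (intro sum.subset_diff) auto
        then show ?thesis using xV yV xy V'_def by simp
      qed
      have sumV': "(\<Sum>v\<in>V'. d' v) + d w = (\<Sum>v\<in>V'. d v) + (d w - 2)"
        unfolding d'_def by (rule sum_upd[OF fV' wV'])
      have S': "(\<Sum>v\<in>V'. d' v) + 6 = ?S" using sumV sumV' w4 by linarith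
      have L'0: "{v \<in> V'. d' v = 1} = {}" using no1 w4 V'_def d'_def by auto
      have O'0: "{v \<in> V'. odd (d' v) \<and> 1 < d' v} = {}"
      proof -
        have "even (d' v)" if "v \<in> V'" for v
          using evd that w4 V'_def d'_def w(1) by (cases "v = w") auto
        then show ?thesis by blast
      qed
      have OL': "card {v \<in> V'. odd (d' v) \<and> 1 < d' v} \<le> card {v \<in> V'. d' v = 1}"
        unfolding O'0 by simp
      have ev': "even (\<Sum>v\<in>V'. d' v)" using S' ev by (metis even_add even_numeral)
      have lo': "2 * card V' \<le> (\<Sum>v\<in>V'. d' v)" using S' SD cD1 cV' by linarith
      have up': "(\<Sum>v\<in>V'. d' v) + card {v \<in> V'. d' v = 1} + 3 \<le> 3 * card V'"
        unfolding L'0 using S' up cV' L0 by simp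
      have "card (V - D) \<le> card V" using fin by (intro card_mono) auto
      then have lt: "card V' < card V" using cV' cVD by linarith
      obtain E' where E': "goodG V' E'" "\<forall>v\<in>V'. deg E' v = d' v"
        using less.hyps[OF lt fV' pos' ev' lo' OL' up'] by blast
      have dw': "2 \<le> deg E' w" using E'(2) wV' w4 d'_def by simp
      note AT = add_triangle[OF fV' E'(1) wV' xV' xy dw']
      let ?E = "E' \<union> {{w, x}, {x, y}, {y, w}}"
      have "\<forall>v\<in>V. deg ?E v = d v"
      proof
        fix v assume "v \<in> V"
        then consider "v = x" | "v = y" | "v = w" | "v \<in> V'" "v \<noteq> w" using VV' by blast
        then show "deg ?E v = d v"
        proof cases
          case 1 then show ?thesis using AT(2) xV by simp
        next
          case 2 then show ?thesis using AT(3) yV by simp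
        next
          case 3 then show ?thesis using AT(4) E'(2) wV' w4 d'_def by simp
        next
          case 4 then show ?thesis using AT(5)[OF 4] E'(2) d'_def by simp
        qed
      qed
      then show ?thesis using AT(1) VV' by auto
    qed
  qed
qed

theorem theorem6p2:
  fixes n :: nat and d :: "nat \<Rightarrow> nat"
  assumes "degree_sequence n d"
    and "n \<ge> 3"
    and "(\<Sum>i=1..n. d i) > 2 * n"
  shows "(\<exists>E. realization n d E \<and> core_cactus {1..n} E) \<longleftrightarrow>
         (mu_odd n d \<le> mu1 n d \<and>
          int ((\<Sum>i=1..n. d i) div 2) \<le> (3 * (int n - 1) - int (mu1 n d)) div 2)"
proof -
  let ?V = "{1..n}"
  let ?S = "\<Sum>i=1..n. d i"
  have fin: "finite ?V" by simp
  have cV: "card ?V = n" by simp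
  have pos: "\<forall>v\<in>?V. 1 \<le> d v" and ev: "even ?S"
    using assms(1) unfolding degree_sequence_def by auto
  have m1: "mu1 n d = card {v \<in> ?V. d v = 1}" unfolding mu1_def by simp
  have mo: "mu_odd n d = card {v \<in> ?V. odd (d v) \<and> 1 < d v}" unfolding mu_odd_def by simp
  show ?thesis
  proof
    assume "\<exists>E. realization n d E \<and> core_cactus ?V E"
    then obtain E where R: "realization n d E" and C: "core_cactus ?V E" by blast
    have sg: "simple_graph ?V E" and dg: "\<forall>i\<in>?V. deg E i = d i"
      using R unfolding realization_def by auto
    have cac: "cactus ?V E" using C unfolding core_cactus_def by simp
    have L: "{v \<in> ?V. deg E v = 1} = {v \<in> ?V. d v = 1}" using dg by auto
    have O: "{v \<in> ?V. odd (deg E v) \<and> 1 < deg E v} = {v \<in> ?V. odd (d v) \<and> 1 < d v}" using dg by auto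
    have hs: "(\<Sum>v\<in>?V. deg E v) = 2 * card E" using handshake[OF fin sg] .
    have "(\<Sum>v\<in>?V. deg E v) = ?S" using dg by (intro sum.cong) auto
    then have Sm: "?S = 2 * card E" using hs by simp
    have n1: "2 * card E + card {v \<in> ?V. d v = 1} + 3 \<le> 3 * n"
      using N1[OF fin cac] assms(2) L cV by simp
    have pos': "\<forall>v\<in>?V. 1 \<le> deg E v" using pos dg by simp
    have n2: "card {v \<in> ?V. odd (d v) \<and> 1 < d v} \<le> card {v \<in> ?V. d v = 1}"
      using N2[OF fin C pos'] L O by simp
    have dv: "?S div 2 = card E" using Sm by simp
    have "int (card E) \<le> (3 * (int n - 1) - int (card {v \<in> ?V. d v = 1})) div 2"
      using n1 by presburger
    then show "mu_odd n d \<le> mu1 n d \<and>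
          int (?S div 2) \<le> (3 * (int n - 1) - int (mu1 n d)) div 2"
      using n2 m1 mo dv by simp
  next
    assume A: "mu_odd n d \<le> mu1 n d \<and> int (?S div 2) \<le> (3 * (int n - 1) - int (mu1 n d)) div 2"
    have OL: "card {v \<in> ?V. odd (d v) \<and> 1 < d v} \<le> card {v \<in> ?V. d v = 1}" using A m1 mo by simp
    obtain m where m: "?S = 2 * m" using ev by blast
    then have md: "?S div 2 = m" by simp
    have "int m \<le> (3 * (int n - 1) - int (card {v \<in> ?V. d v = 1})) div 2" using A m1 md by simp
    then have "2 * m + card {v \<in> ?V. d v = 1} + 3 \<le> 3 * n" using assms(2) by presburger
    then have up: "?S + card {v \<in> ?V. d v = 1} + 3 \<le> 3 * card ?V" using cV m by simp
    have lo: "2 * card ?V \<le> ?S" using assms(3) cV by simp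
    obtain E where E: "goodG ?V E" "\<forall>v\<in>?V. deg E v = d v"
      using construct[OF fin pos ev lo OL up] by blast
    have "realization n d E" unfolding realization_def using E goodG_def by auto
    moreover have "core_cactus ?V E" using good_core[OF fin E(1)] .
    ultimately show "\<exists>E. realization n d E \<and> core_cactus ?V E" by blast
  qed
qed

end
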